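(* There exist $\delta>0$ and a modulus of continuity $\eta$ such that, for every nearly spherical set $\mathcal A$ of class $C^{1,1}$ with $\mathcal{L}(\mathcal A)=1$, $\operatorname{bar}(\mathcal A)=\mathbf 0$ and $\|\varphi_{\mathcal A}\|_{C^{1,1}(\mathbb{S}^{N-1})}<\delta$, writing $\psi_{\mathcal A}=\sum_{k\ge0}c_kS_k$ with $c_k=(\psi_{\mathcal A},S_k)_{L^2(\mathbb{S}^{N-1})}$, one has $c_0=0$ and $\sum_{k\ge N+1}c_k^2=\|\psi_{\mathcal A}\|^2_{L^2(\mathbb{S}^{N-1})}\big(1+\eta(\|\varphi_{\mathcal A}\|_{L^\infty(\mathbb{S}^{N-1})})\big)$.
   Context: $B=B_{r_0}(\mathbf 0)$, $\mathcal{L}(B)=1$. $\mathcal A$ nearly spherical parametrized by $\varphi_{\mathcal A}$: $\varphi_{\mathcal A}\in C^{1,1}(\mathbb{S}^{N-1})$, $\|\varphi_{\mathcal A}\|_{L^\infty}\le r_0/2$, $\partial\mathcal A=\{(r_0+\varphi_{\mathcal A}(\theta))\theta\}$; $\operatorname{bar}$ is the barycenter. $\psi_{\mathcal A}(\theta)=\frac{(r_0+\varphi_{\mathcal A}(\theta))^N-r_0^N}{Nr_0^{N-1}}$. $(S_k)$ is an orthonormal basis of $L^2(\mathbb{S}^{N-1})$ of eigenfunctions of $-\Delta_{\mathbb{S}^{N-1}}$ with eigenvalues $\sigma_0=0<\sigma_1=\dots=\sigma_N=N-1<\sigma_{N+1}\le\dots$, $S_0$ constant and $S_1,\dots,S_N$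 the normalized coordinate functions. *)

theory Defs
  imports "HOL-Analysis.Analysis"
begin

abbreviation usphere :: "(real^'n) set" where
  "usphere \<equiv> sphere 0 1"

text \<open>Surface (Hausdorff) measure on the unit sphere, defined as the cone measure:
  sigma(E) = N * Lebesgue measure of {t x : 0 < t < 1, x in E}.\<close>
definition sphere_measure :: "(real^'n) measure" where
  "sphere_measure = scale_measure (ennreal (real CARD('n)))
     (distr (restrict_space lborel (ball 0 1 - {0})) (restrict_space lborel usphere)
        (\<lambda>x. x /\<^sub>R norm x))"

definition L2_sphere :: "((real^'n) \<Rightarrow> real) \<Rightarrow> bool" where
  "L2_sphere f \<longleftrightarrow> f \<in> borel_measurable sphere_measure \<and>
     integrable sphere_measure (\<lambda>x. (f x)\<^sup>2)"

definition L2_inner :: "((real^'n) \<Rightarrow> real) \<Rightarrow> ((real^'n) \<Rightarrow> real) \<Rightarrow> real" where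
  "L2_inner f g = (\<integral>x. f x * g x \<partial>sphere_measure)"

definition L2_norm_sq :: "((real^'n) \<Rightarrow> real) \<Rightarrow> real" where
  "L2_norm_sq f = (\<integral>x. (f x)\<^sup>2 \<partial>sphere_measure)"

definition hext :: "((real^'n) \<Rightarrow> real) \<Rightarrow> (real^'n) \<Rightarrow> real" where
  "hext f x = f (x /\<^sub>R norm x)"

text \<open>Tangential gradient = Euclidean gradient of the 0-homogeneous extension.\<close>
definition sph_grad :: "((real^'n) \<Rightarrow> real) \<Rightarrow> (real^'n) \<Rightarrow> real^'n" where
  "sph_grad f x = (\<chi> i. frechet_derivative (hext f) (at x) (axis i 1))"

text \<open>Laplace-Beltrami operator via the 0-homogeneous extension: at |x| = 1 the
  Euclidean Laplacian of the 0-homogeneous extension equals the spherical Laplacian.\<close>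
definition partial_deriv :: "((real^'n) \<Rightarrow> real) \<Rightarrow> 'n \<Rightarrow> (real^'n) \<Rightarrow> real" where
  "partial_deriv u i x = deriv (\<lambda>t. u (x + t *\<^sub>R axis i 1)) 0"

definition laplacian :: "((real^'n) \<Rightarrow> real) \<Rightarrow> (real^'n) \<Rightarrow> real" where
  "laplacian u x = (\<Sum>i\<in>UNIV. partial_deriv (\<lambda>y. partial_deriv u i y) i x)"

definition sph_laplacian :: "((real^'n) \<Rightarrow> real) \<Rightarrow> (real^'n) \<Rightarrow> real" where
  "sph_laplacian f x = laplacian (hext f) x"

definition C11_sphere :: "((real^'n) \<Rightarrow> real) \<Rightarrow> bool" where
  "C11_sphere f \<longleftrightarrow> (\<forall>x\<in>usphere. hext f differentiable (at x)) \<and>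
     (\<exists>L. \<forall>x\<in>usphere. \<forall>y\<in>usphere. norm (sph_grad f x - sph_grad f y) \<le> L * dist x y)"

definition Linf_sphere :: "((real^'n) \<Rightarrow> real) \<Rightarrow> real" where
  "Linf_sphere f = (SUP x\<in>usphere. \<bar>f x\<bar>)"

definition C11_norm :: "((real^'n) \<Rightarrow> real) \<Rightarrow> real" where
  "C11_norm f = Linf_sphere f + (SUP x\<in>usphere. norm (sph_grad f x))
     + (SUP p\<in>{(x,y). x \<in> usphere \<and> y \<in> usphere \<and> x \<noteq> y}.
          norm (sph_grad f (fst p) - sph_grad f (snd p)) / dist (fst p) (snd p))"

definition ns_set :: "real \<Rightarrow> ((real^'n) \<Rightarrow> real) \<Rightarrow> (real^'n) set" where
  "ns_set r0 \<phi> = {t *\<^sub>R \<theta> | t \<theta>. \<theta> \<in> usphere \<and> 0 \<le> t \<and> t < r0 + \<phi> \<theta>}"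

definition barycenter :: "(real^'n) set \<Rightarrow> real^'n" where
  "barycenter A = (1 / measure lebesgue A) *\<^sub>R (set_lebesgue_integral lebesgue A (\<lambda>x. x))"

definition psi_fun :: "real \<Rightarrow> ((real^'n) \<Rightarrow> real) \<Rightarrow> (real^'n) \<Rightarrow> real" where
  "psi_fun r0 \<phi> \<theta> = ((r0 + \<phi> \<theta>) ^ CARD('n) - r0 ^ CARD('n)) / (real CARD('n) * r0 ^ (CARD('n) - 1))"

definition modulus :: "(real \<Rightarrow> real) \<Rightarrow> bool" where
  "modulus \<eta> \<longleftrightarrow> \<eta> 0 = 0 \<and> (\<forall>t\<ge>0. \<eta> t \<ge> 0) \<and> mono_on {0..} \<eta> \<and> (\<eta> \<longlongrightarrow> 0) (at_right 0)"

end

theory Submission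
  imports Defs
begin


lemma P_measurable[measurable]:
  "(\<lambda>x::real^'n. x /\<^sub>R norm x) \<in> borel_measurable borel"
  by measurable

lemma P_in_sphere: "(x::real^'n) \<noteq> 0 \<Longrightarrow> x /\<^sub>R norm x \<in> usphere"
  by (simp add: norm_sgn sgn_div_norm[symmetric])

lemma P_meas_restrict:
  "(\<lambda>x::real^'n. x /\<^sub>R norm x) \<in> restrict_space lborel (ball 0 1 - {0}) \<rightarrow>\<^sub>M restrict_space lborel usphere"
proof (rule measurable_restrict_space2)
  show "(\<lambda>x::real^'n. x /\<^sub>R norm x) \<in> restrict_space lborel (ball 0 1 - {0}) \<rightarrow>\<^sub>M lborel"
    by (rule measurable_restrict_space1) (simp add: measurable_lborel1)
  show "(\<lambda>x::real^'n. x /\<^sub>R norm x) \<in> space (restrict_space lborel (ball 0 1 - {0})) \<rightarrow> usphere"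
    using P_in_sphere by (auto simp: space_restrict_space)
qed

lemma sets_sm: "sets (sphere_measure::(real^'n) measure) = sets (restrict_space lborel usphere)"
  unfolding sphere_measure_def by simp

lemma space_sm: "space (sphere_measure::(real^'n) measure) = usphere"
  using sets_eq_imp_space_eq[OF sets_sm] by (simp add: space_restrict_space)

lemma emeasure_sm:
  assumes B: "B \<in> sets (sphere_measure::(real^'n) measure)"
  shows "emeasure sphere_measure B = ennreal (real CARD('n)) *
     emeasure lborel {x. x \<in> ball 0 1 - {0} \<and> x /\<^sub>R norm x \<in> B}"
proof -
  have Bs: "B \<in> sets (restrict_space lborel usphere)" using B sets_sm by blast
  have "emeasure sphere_measure B = ennreal (real CARD('n)) *
     emeasure (distr (restrict_space lborel (ball 0 1 - {0})) (restrict_space lborel (usphere::(real^'n) set))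
        (\<lambda>x. x /\<^sub>R norm x)) B"
    unfolding sphere_measure_def by (simp add: emeasure_scale_measure)
  also have "\<dots> = ennreal (real CARD('n)) * emeasure (restrict_space lborel (ball 0 1 - {0}))
       ((\<lambda>x. x /\<^sub>R norm x) -` B \<inter> space (restrict_space lborel (ball 0 1 - {0})))"
    by (subst emeasure_distr[OF P_meas_restrict Bs]) simp
  also have "\<dots> = ennreal (real CARD('n)) *
     emeasure lborel {x. x \<in> ball 0 1 - {0} \<and> x /\<^sub>R norm x \<in> B}"
  proof -
    have "(\<lambda>x. x /\<^sub>R norm x) -` B \<inter> space (restrict_space lborel (ball 0 1 - {0})) \<in> sets (restrict_space lborel (ball (0::real^'n) 1 - {0}))"
      using measurable_sets[OF P_meas_restrict Bs] .
    moreover have "(\<lambda>x. x /\<^sub>R norm x) -` B \<inter> (ball 0 1 - {0}) = {x::real^'n. x \<in> ball 0 1 - {0} \<and> x /\<^sub>R norm x \<in> B}"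
      by auto
    ultimately show ?thesis
      by (subst emeasure_restrict_space) (auto simp: space_restrict_space)
  qed
  finally show ?thesis .
qed



definition pcone :: "real \<Rightarrow> (real^'n) set \<Rightarrow> (real^'n) set" where
  "pcone s B = {x. x \<noteq> 0 \<and> norm x < s \<and> x /\<^sub>R norm x \<in> B}"

lemma pcone_pre_sets:
  assumes "B \<in> sets (restrict_space lborel (usphere::(real^'n) set))"
  shows "{x::real^'n. x \<noteq> 0 \<and> x /\<^sub>R norm x \<in> B} \<in> sets lborel"
proof -
  obtain B' where B': "B' \<in> sets lborel" "B = usphere \<inter> B'"
    using assms by (auto simp: sets_restrict_space)
  have "{x::real^'n. x \<noteq> 0 \<and> x /\<^sub>R norm x \<in> B} = (-{0}) \<inter> ((\<lambda>x. x /\<^sub>R norm x) -` B' \<inter> space lborel)"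
    using B'(2) P_in_sphere by auto
  also have "\<dots> \<in> sets lborel"
  proof -
    have m: "(\<lambda>x::real^'n. x /\<^sub>R norm x) \<in> lborel \<rightarrow>\<^sub>M lborel" by (simp add: measurable_lborel1)
    show ?thesis using measurable_sets[OF m B'(1)] by auto
  qed
  finally show ?thesis .
qed

lemma pcone_sets:
  assumes "B \<in> sets (restrict_space lborel (usphere::(real^'n) set))"
  shows "pcone s B \<in> sets lborel"
proof -
  have "pcone s B = {x::real^'n. x \<noteq> 0 \<and> x /\<^sub>R norm x \<in> B} \<inter> ball 0 s"
    by (auto simp: pcone_def)
  then show ?thesis using pcone_pre_sets[OF assms] by auto
qed

lemma P_scale: "s > 0 \<Longrightarrow> (s *\<^sub>R (y::real^'n)) /\<^sub>R norm (s *\<^sub>R y) = y /\<^sub>R norm y"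
  by (simp add: field_simps)

lemma pcone_scale:
  assumes "s > 0"
  shows "pcone s B = (\<lambda>x. s *\<^sub>R x + 0) ` pcone 1 (B::(real^'n) set)"
proof (intro set_eqI iffI)
  fix x assume x: "x \<in> pcone s B"
  show "x \<in> (\<lambda>x. s *\<^sub>R x + 0) ` pcone 1 B"
  proof (rule image_eqI[where x="(1/s) *\<^sub>R x"])
    show "x = s *\<^sub>R (1 / s) *\<^sub>R x + 0" using assms by simp
    show "(1 / s) *\<^sub>R x \<in> pcone 1 B" using x assms
      by (auto simp: pcone_def divide_simps)
  qed
next
  fix x assume "x \<in> (\<lambda>x. s *\<^sub>R x + 0) ` pcone 1 B"
  then obtain y where y: "y \<in> pcone 1 B" "x = s *\<^sub>R y" by auto
  then show "x \<in> pcone s B" using assms P_scale[OF assms, of y]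
    by (auto simp: pcone_def simp del: scaleR_scaleR)
qed

lemma emeasure_pcone:
  assumes B: "B \<in> sets (restrict_space lborel (usphere::(real^'n) set))" and s: "s \<ge> 0"
  shows "emeasure lborel (pcone s B) = ennreal (s ^ CARD('n)) * emeasure lborel (pcone 1 B)"
proof (cases "s = 0")
  case True
  then have "pcone s B = {}" by (auto simp: pcone_def)
  then show ?thesis using True by simp
next
  case False
  then have s0: "s > 0" using s by simp
  have "emeasure lborel (pcone s B) = emeasure lebesgue (pcone s B)"
    using pcone_sets[OF B] by simp
  also have "\<dots> = ennreal (s ^ CARD('n)) * emeasure lebesgue (pcone 1 B)"
    unfolding pcone_scale[OF s0] using s0 by (subst emeasure_lebesgue_affine) simp
  also have "\<dots> = ennreal (s ^ CARD('n)) * emeasure lborel (pcone 1 B)"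
    using pcone_sets[OF B] by simp
  finally show ?thesis .
qed

lemma emeasure_sm_pcone:
  assumes B: "B \<in> sets (sphere_measure::(real^'n) measure)"
  shows "emeasure sphere_measure B = ennreal (real CARD('n)) * emeasure lborel (pcone 1 B)"
proof -
  have "{x \<in> ball 0 1 - {0}. x /\<^sub>R norm x \<in> B} = pcone 1 B" by (auto simp: pcone_def)
  then show ?thesis unfolding emeasure_sm[OF B] by simp
qed



lemma measure_eqI_Iio:
  fixes M N :: "real measure"
  assumes sets: "sets M = sets borel" "sets N = sets borel"
  assumes fin: "\<And>x. emeasure M {..< x} < \<infinity>"
  assumes "\<And>x. emeasure M {..< x} = emeasure N {..< x}"
  shows "M = N"
proof (rule measure_eqI_generator_eq_countable)
  let ?LT = "\<lambda>a::real. {..< a}" let ?E = "range ?LT"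
  show "Int_stable ?E"
  proof (clarsimp simp: Int_stable_def)
    fix a b :: real
    have "{..<a} \<inter> {..<b} = {..<min a b}" by auto
    then show "{..<a} \<inter> {..<b} \<in> range lessThan" by (metis rangeI)
  qed
  show "?E \<subseteq> Pow UNIV" "sets M = sigma_sets UNIV ?E" "sets N = sigma_sets UNIV ?E"
    unfolding sets borel_Iio by auto
  show "?LT`Rats \<subseteq> ?E" "(\<Union>i\<in>Rats. ?LT i) = UNIV" "\<And>a. a \<in> ?LT`Rats \<Longrightarrow> emeasure M a \<noteq> \<infinity>"
    using fin by (auto simp: less_top) (meson Rats_dense_in_real less_add_one)
qed (auto intro: assms countable_rat)

definition M1 :: "nat \<Rightarrow> real \<Rightarrow> real measure" where
  "M1 N R = density lborel (\<lambda>r. ennreal (indicator {0<..<R} r * r ^ (N - 1)))"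

lemma emeasure_M1_Iio:
  assumes N: "N \<ge> 1"
  shows "emeasure (M1 N R) {..<x} = ennreal (max 0 (min R x) ^ N / N)"
proof -
  define m where "m = max 0 (min R x)"
  have m0: "0 \<le> m" by (simp add: m_def)
  have "emeasure (M1 N R) {..<x} = (\<integral>\<^sup>+ r. ennreal (indicator {0<..<R} r * r ^ (N - 1)) * indicator {..<x} r \<partial>lborel)"
    unfolding M1_def by (simp add: emeasure_density)
  also have "\<dots> = (\<integral>\<^sup>+ r. ennreal (r ^ (N - 1)) * indicator {0..m} r \<partial>lborel)"
  proof (rule nn_integral_cong_AE)
    have "AE r in lborel. r \<noteq> 0" by (rule AE_lborel_singleton)
    moreover have "AE r in lborel. r \<noteq> m" by (rule AE_lborel_singleton)
    ultimately show "AE r in lborel. ennreal (indicator {0<..<R} r * r ^ (N - 1)) * indicator {..<x} r =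
        ennreal (r ^ (N - 1)) * indicator {0..m} r"
      by eventually_elim (auto simp: m_def indicator_def)
  qed
  also have "\<dots> = ennreal (m ^ N / N - 0 ^ N / N)"
  proof (rule nn_integral_FTC_Icc[where F="\<lambda>r. r ^ N / N"])
    show "(\<lambda>r::real. r ^ (N - 1)) \<in> borel_measurable borel"
      by (intro borel_measurable_continuous_onI continuous_intros)
    show "0 \<le> m" by (rule m0)
    fix r :: real assume "r \<in> {0..m}"
    then show "0 \<le> r ^ (N - 1)" by simp
    show "((\<lambda>r. r ^ N / N) has_real_derivative r ^ (N - 1)) (at r)"
      using N by (auto intro!: derivative_eq_intros simp: field_simps)
  qed
  also have "(0::real) ^ N = 0" using N by (simp add: power_0_left)
  finally show ?thesis by (simp add: m_def)
qed



lemma pcone_Iio: "{y \<in> pcone R B. norm y < x} = pcone (max 0 (min R x)) B"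
  by (auto simp: pcone_def max_def min_def; smt (verit) norm_ge_zero)

lemma emeasure_distr_cone_Iio:
  assumes B: "B \<in> sets (restrict_space lborel (usphere::(real^'n) set))"
  shows "emeasure (distr (restrict_space lborel (pcone R B)) borel norm) {..<x}
    = emeasure lborel (pcone (max 0 (min R x)) B)"
proof -
  have nm: "norm \<in> restrict_space lborel (pcone R B) \<rightarrow>\<^sub>M (borel :: real measure)"
    by (intro measurable_restrict_space1) simp
  have "emeasure (distr (restrict_space lborel (pcone R B)) borel norm) {..<x}
      = emeasure (restrict_space lborel (pcone R B)) (norm -` {..<x} \<inter> pcone R B)"
    by (subst emeasure_distr[OF nm]) (auto simp: space_restrict_space)
  also have "\<dots> = emeasure lborel (norm -` {..<x} \<inter> pcone R B)"
    using pcone_sets[OF B, of R]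
    by (subst emeasure_restrict_space) auto
  also have "norm -` {..<x} \<inter> pcone R B = pcone (max 0 (min R x)) B"
    by (auto simp: pcone_def max_def min_def; smt (verit) norm_ge_zero)
  finally show ?thesis .
qed

lemma distr_cone_eq:
  assumes B: "B \<in> sets (restrict_space lborel (usphere::(real^'n) set))" and R: "R > 0"
  shows "distr (restrict_space lborel (pcone R B)) borel norm =
    scale_measure (ennreal (real CARD('n)) * emeasure lborel (pcone 1 B)) (M1 CARD('n) R)"
proof (rule measure_eqI_Iio)
  show "sets (distr (restrict_space lborel (pcone R B)) borel norm) = sets borel" by simp
  show "sets (scale_measure (ennreal (real CARD('n)) * emeasure lborel (pcone 1 B)) (M1 CARD('n) R)) = sets borel"
    by (simp add: M1_def)
  fix x :: real
  have "emeasure lborel (pcone (max 0 (min R x)) B) \<le> emeasure lborel (ball (0::real^'n) R)"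
  proof (rule emeasure_mono)
    show "pcone (max 0 (min R x)) B \<subseteq> ball 0 R"
      by (auto simp: pcone_def max_def min_def; smt (verit) norm_ge_zero)
  qed simp
  also have "\<dots> < \<infinity>" by (rule emeasure_bounded_finite) simp
  finally show "emeasure (distr (restrict_space lborel (pcone R B)) borel norm) {..<x} < \<infinity>"
    unfolding emeasure_distr_cone_Iio[OF B] .
  have "emeasure (distr (restrict_space lborel (pcone R B)) borel norm) {..<x}
     = ennreal (max 0 (min R x) ^ CARD('n)) * emeasure lborel (pcone 1 B)"
    unfolding emeasure_distr_cone_Iio[OF B] by (rule emeasure_pcone[OF B]) simp
  also have "\<dots> = ennreal (real CARD('n)) * emeasure lborel (pcone 1 B) *
       ennreal (max 0 (min R x) ^ CARD('n) / CARD('n))"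
  proof -
    have "ennreal (real CARD('n)) * ennreal (max 0 (min R x) ^ CARD('n) / CARD('n))
        = ennreal (max 0 (min R x) ^ CARD('n))"
      by (subst ennreal_mult[symmetric]) auto
    then show ?thesis by (metis mult.assoc mult.commute)
  qed
  also have "\<dots> = emeasure (scale_measure (ennreal (real CARD('n)) * emeasure lborel (pcone 1 B)) (M1 CARD('n) R)) {..<x}"
    by (simp add: emeasure_M1_Iio)
  finally show "emeasure (distr (restrict_space lborel (pcone R B)) borel norm) {..<x} =
       emeasure (scale_measure (ennreal (real CARD('n)) * emeasure lborel (pcone 1 B)) (M1 CARD('n) R)) {..<x}" .
qed


lemma sf_M1: "sigma_finite_measure (M1 N R)"
  unfolding M1_def
  by (subst sigma_finite_measure.sigma_finite_iff_density_finite'[OF sigma_finite_lborel]) auto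

lemma finite_sm: "finite_measure (sphere_measure :: (real^'n) measure)"
proof (rule finite_measureI)
  have "usphere \<in> sets (sphere_measure :: (real^'n) measure)"
    using sets.top[of "sphere_measure :: (real^'n) measure"] by (simp add: space_sm)
  then have "emeasure (sphere_measure :: (real^'n) measure) usphere = ennreal (real CARD('n)) * emeasure lborel (pcone 1 (usphere::(real^'n) set))"
    by (rule emeasure_sm_pcone)
  also have "\<dots> < \<infinity>"
  proof -
    have "emeasure lborel (pcone 1 (usphere::(real^'n) set)) \<le> emeasure lborel (ball (0::real^'n) 1)"
    proof (rule emeasure_mono)
      show "pcone 1 usphere \<subseteq> ball (0::real^'n) 1" by (auto simp: pcone_def)
    qed simp
    also have "\<dots> < \<infinity>" by (rule emeasure_bounded_finite) simp
    finally show ?thesis by (simp add: ennreal_mult_less_top)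
  qed
  finally show "emeasure (sphere_measure :: (real^'n) measure) (space sphere_measure) \<noteq> \<infinity>"
    by (simp add: space_sm)
qed

lemma sf_sm: "sigma_finite_measure (sphere_measure :: (real^'n) measure)"
  using finite_sm by (rule finite_measure.axioms(1))

lemma polar_map_meas:
  "(\<lambda>x::real^'n. (norm x, x /\<^sub>R norm x)) \<in> restrict_space lborel (ball 0 R - {0}) \<rightarrow>\<^sub>M (M1 N R \<Otimes>\<^sub>M sphere_measure)"
proof (rule measurable_Pair)
  show "(\<lambda>x::real^'n. norm x) \<in> restrict_space lborel (ball 0 R - {0}) \<rightarrow>\<^sub>M M1 N R"
    unfolding M1_def by (simp add: measurable_restrict_space1 cong: measurable_cong_sets)
  have "(\<lambda>x::real^'n. x /\<^sub>R norm x) \<in> restrict_space lborel (ball 0 R - {0}) \<rightarrow>\<^sub>M restrict_space lborel usphere"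
  proof (rule measurable_restrict_space2)
    show "(\<lambda>x::real^'n. x /\<^sub>R norm x) \<in> restrict_space lborel (ball 0 R - {0}) \<rightarrow>\<^sub>M lborel"
      by (rule measurable_restrict_space1) (simp add: measurable_lborel1)
    show "(\<lambda>x::real^'n. x /\<^sub>R norm x) \<in> space (restrict_space lborel (ball 0 R - {0})) \<rightarrow> usphere"
      using P_in_sphere by (auto simp: space_restrict_space)
  qed
  then show "(\<lambda>x::real^'n. x /\<^sub>R norm x) \<in> restrict_space lborel (ball 0 R - {0}) \<rightarrow>\<^sub>M sphere_measure"
    by (subst measurable_cong_sets[OF refl sets_sm])
qed

definition PM :: "real \<Rightarrow> (real \<times> (real^'n)) measure" where
  "PM R = distr (restrict_space lborel (ball 0 R - {0})) (M1 CARD('n) R \<Otimes>\<^sub>M sphere_measure)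
      (\<lambda>x::real^'n. (norm x, x /\<^sub>R norm x))"

lemma pair_eq_PM:
  assumes R: "R > 0"
  shows "M1 CARD('n) R \<Otimes>\<^sub>M (sphere_measure :: (real^'n) measure) = PM R"
proof (rule pair_measure_eqI[OF sf_M1 sf_sm])
  show "sets (M1 CARD('n) R \<Otimes>\<^sub>M (sphere_measure :: (real^'n) measure)) = sets (PM R)"
    by (simp add: PM_def)
  fix A B assume A: "A \<in> sets (M1 CARD('n) R)" and B: "B \<in> sets (sphere_measure :: (real^'n) measure)"
  have B': "B \<in> sets (restrict_space lborel (usphere::(real^'n) set))" using B sets_sm by blast
  have Ab: "A \<in> sets (borel :: real measure)" using A by (simp add: M1_def)
  have "emeasure (PM R) (A \<times> B) = emeasure (restrict_space lborel (ball 0 R - {0}))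
      ((\<lambda>x::real^'n. (norm x, x /\<^sub>R norm x)) -` (A \<times> B) \<inter> space (restrict_space lborel (ball 0 R - {0})))"
    unfolding PM_def using A B by (subst emeasure_distr[OF polar_map_meas]) auto
  also have "\<dots> = emeasure lborel (norm -` A \<inter> pcone R B)"
  proof -
    have eq: "(\<lambda>x::real^'n. (norm x, x /\<^sub>R norm x)) -` (A \<times> B) \<inter> space (restrict_space lborel (ball 0 R - {0}))
        = norm -` A \<inter> pcone R B"
      by (auto simp: pcone_def space_restrict_space)
    have "norm -` A \<inter> pcone R B \<in> sets lborel"
      using pcone_sets[OF B', of R] measurable_sets[OF borel_measurable_norm Ab] by auto
    then show ?thesis unfolding eq
      by (subst emeasure_restrict_space) (auto simp: pcone_def)
  qed
  also have "\<dots> = emeasure (distr (restrict_space lborel (pcone R B)) borel norm) A"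
  proof -
    have nm: "norm \<in> restrict_space lborel (pcone R B) \<rightarrow>\<^sub>M (borel :: real measure)"
      by (intro measurable_restrict_space1) simp
    show ?thesis
      using pcone_sets[OF B', of R] Ab
      by (subst emeasure_distr[OF nm Ab]) (auto simp: space_restrict_space emeasure_restrict_space)
  qed
  also have "\<dots> = ennreal (real CARD('n)) * emeasure lborel (pcone 1 B) * emeasure (M1 CARD('n) R) A"
    unfolding distr_cone_eq[OF B' R] by simp
  also have "\<dots> = emeasure (M1 CARD('n) R) A * emeasure sphere_measure B"
    unfolding emeasure_sm_pcone[OF B] by (simp add: ac_simps)
  finally show "emeasure (M1 CARD('n) R) A * emeasure sphere_measure B = emeasure (PM R) (A \<times> B)" by simp
qed

lemma polar_nn:
  assumes R: "R > 0" and f: "f \<in> borel_measurable (M1 CARD('n) R \<Otimes>\<^sub>M (sphere_measure :: (real^'n) measure))"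
  shows "(\<integral>\<^sup>+ x. f (norm x, x /\<^sub>R norm x) \<partial>restrict_space lborel (ball (0::real^'n) R - {0}))
    = (\<integral>\<^sup>+ \<theta>. (\<integral>\<^sup>+ r. f (r, \<theta>) \<partial>M1 CARD('n) R) \<partial>sphere_measure)"
proof -
  interpret pair_sigma_finite "M1 CARD('n) R" "sphere_measure :: (real^'n) measure"
    using sf_M1 sf_sm by (simp add: pair_sigma_finite_def)
  have "(\<integral>\<^sup>+ x. f (norm x, x /\<^sub>R norm x) \<partial>restrict_space lborel (ball (0::real^'n) R - {0}))
      = integral\<^sup>N (PM R) f"
    unfolding PM_def using f by (subst nn_integral_distr[OF polar_map_meas]) (auto simp: PM_def)
  also have "\<dots> = integral\<^sup>N (M1 CARD('n) R \<Otimes>\<^sub>M sphere_measure) f"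
    unfolding pair_eq_PM[OF R] ..
  also have "\<dots> = (\<integral>\<^sup>+ \<theta>. (\<integral>\<^sup>+ r. f (r, \<theta>) \<partial>M1 CARD('n) R) \<partial>sphere_measure)"
    by (rule nn_integral_snd[symmetric, OF f])
  finally show ?thesis .
qed



lemma sets_sm_borel: "sets (sphere_measure::(real^'n) measure) = sets (restrict_space borel usphere)"
  unfolding sets_sm by (rule sets_restrict_space_cong) simp

lemma cont_meas_sm:
  assumes "continuous_on usphere (g :: real^'n \<Rightarrow> real)"
  shows "g \<in> borel_measurable sphere_measure"
  using borel_measurable_continuous_on_restrict[OF assms]
  by (subst measurable_cong_sets[OF sets_sm_borel refl])

lemma inner_radial:
  fixes m N :: nat and R a g :: real
  assumes N: "N \<ge> 1" and a: "0 < a" "a < R" and g: "0 \<le> g"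
  shows "(\<integral>\<^sup>+ r. ennreal (if r < a then r ^ m * g else 0) \<partial>M1 N R) = ennreal (a ^ (N + m) / (N + m) * g)"
proof -
  have "(\<integral>\<^sup>+ r. ennreal (if r < a then r ^ m * g else 0) \<partial>M1 N R)
      = (\<integral>\<^sup>+ r. ennreal (indicator {0<..<R} r * r ^ (N - 1)) * ennreal (if r < a then r ^ m * g else 0) \<partial>lborel)"
    unfolding M1_def by (subst nn_integral_density) (auto intro!: borel_measurable_continuous_onI continuous_intros)
  also have "\<dots> = (\<integral>\<^sup>+ r. ennreal (r ^ (N + m - 1) * g) * indicator {0..a} r \<partial>lborel)"
  proof (rule nn_integral_cong_AE)
    have "AE r in lborel. r \<noteq> 0" by (rule AE_lborel_singleton)
    moreover have "AE r in lborel. r \<noteq> a" by (rule AE_lborel_singleton)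
    ultimately show "AE r in lborel. ennreal (indicator {0<..<R} r * r ^ (N - 1)) * ennreal (if r < a then r ^ m * g else 0) =
        ennreal (r ^ (N + m - 1) * g) * indicator {0..a} r"
    proof eventually_elim
      case (elim r)
      have "r ^ (N - 1) * (r ^ m * g) = r ^ (N + m - 1) * g"
        using N by (simp add: power_add[symmetric] mult.assoc)
      then show ?case using elim a g
        by (auto simp: indicator_def ennreal_mult'[symmetric] mult.assoc)
    qed
  qed
  also have "\<dots> = ennreal (a ^ (N + m) / (N + m) * g - 0 ^ (N + m) / (N + m) * g)"
  proof (rule nn_integral_FTC_Icc[where F="\<lambda>r. r ^ (N + m) / (N + m) * g"])
    show "(\<lambda>r::real. r ^ (N + m - 1) * g) \<in> borel_measurable borel"
      by (intro borel_measurable_continuous_onI continuous_intros)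
    show "0 \<le> a" using a by simp
    fix r :: real assume "r \<in> {0..a}"
    then show "0 \<le> r ^ (N + m - 1) * g" using g by simp
    show "((\<lambda>r. r ^ (N + m) / (N + m) * g) has_real_derivative r ^ (N + m - 1) * g) (at r)"
    proof -
      define k where "k = N + m"
      have k: "real k \<noteq> 0" using N by (simp add: k_def)
      have "((\<lambda>r. r ^ k / k * g) has_real_derivative (real k * r ^ (k - 1)) / k * g) (at r)"
        by (auto intro!: derivative_eq_intros)
      then show ?thesis using k unfolding k_def[symmetric] by simp
    qed
  qed
  also have "(0::real) ^ (N + m) = 0" using N by (simp add: power_0_left)
  finally show ?thesis by simp
qed



lemma polar_A:
  fixes \<rho> G :: "real^'n \<Rightarrow> real" and m :: nat
  assumes \<rho>c: "continuous_on usphere \<rho>" and \<rho>pos: "\<forall>\<theta>\<in>usphere. 0 < \<rho> \<theta>"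
    and Gc: "continuous_on usphere G" and Gpos: "\<forall>\<theta>\<in>usphere. 0 \<le> G \<theta>"
  shows "(\<integral>\<^sup>+ x. ennreal (indicator {x. x \<noteq> 0 \<and> norm x < \<rho> (x /\<^sub>R norm x)} x * (norm x ^ m * G (x /\<^sub>R norm x))) \<partial>lborel)
    = (\<integral>\<^sup>+ \<theta>. ennreal (\<rho> \<theta> ^ (CARD('n) + m) / (CARD('n) + m) * G \<theta>) \<partial>sphere_measure)"
proof -
  obtain B where B: "\<forall>\<theta>\<in>usphere. \<bar>\<rho> \<theta>\<bar> \<le> B"
    using compact_imp_bounded[OF compact_continuous_image[OF \<rho>c compact_sphere]]
    by (auto simp: bounded_real)
  define R where "R = \<bar>B\<bar> + 1"
  have R: "R > 0" by (simp add: R_def)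
  have \<rho>R: "\<forall>\<theta>\<in>usphere. \<rho> \<theta> < R"
  proof
    fix \<theta> :: "real^'n" assume "\<theta> \<in> usphere"
    then have "\<bar>\<rho> \<theta>\<bar> \<le> B" using B by blast
    then show "\<rho> \<theta> < R" by (simp add: R_def)
  qed
  define f where "f z = ennreal (if fst z < \<rho> (snd z) then fst z ^ m * G (snd z) else 0)" for z :: "real \<times> (real^'n)"
  have [measurable]: "\<rho> \<in> borel_measurable sphere_measure" "G \<in> borel_measurable sphere_measure"
    using cont_meas_sm \<rho>c Gc by auto
  have fstm[measurable]: "fst \<in> borel_measurable (M1 CARD('n) R \<Otimes>\<^sub>M (sphere_measure::(real^'n) measure))"
    by (rule measurable_compose[OF measurable_fst]) (simp add: M1_def)
  have fm: "f \<in> borel_measurable (M1 CARD('n) R \<Otimes>\<^sub>M (sphere_measure::(real^'n) measure))"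
    unfolding f_def by measurable
  have "(\<integral>\<^sup>+ x. ennreal (indicator {x. x \<noteq> 0 \<and> norm x < \<rho> (x /\<^sub>R norm x)} x * (norm x ^ m * G (x /\<^sub>R norm x))) \<partial>lborel)
     = (\<integral>\<^sup>+ x. f (norm x, x /\<^sub>R norm x) * indicator (ball 0 R - {0}) x \<partial>lborel)"
  proof (rule nn_integral_cong)
    fix x :: "real^'n"
    show "ennreal (indicator {x. x \<noteq> 0 \<and> norm x < \<rho> (x /\<^sub>R norm x)} x * (norm x ^ m * G (x /\<^sub>R norm x)))
        = f (norm x, x /\<^sub>R norm x) * indicator (ball 0 R - {0}) x"
    proof (cases "x = 0")
      case False
      then have "\<rho> (x /\<^sub>R norm x) < R" using \<rho>R P_in_sphere by blast
      then show ?thesis using False by (auto simp: f_def indicator_def)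
    qed (simp add: f_def)
  qed
  also have "\<dots> = (\<integral>\<^sup>+ x. f (norm x, x /\<^sub>R norm x) \<partial>restrict_space lborel (ball (0::real^'n) R - {0}))"
    by (subst nn_integral_restrict_space) auto
  also have "\<dots> = (\<integral>\<^sup>+ \<theta>. (\<integral>\<^sup>+ r. f (r, \<theta>) \<partial>M1 CARD('n) R) \<partial>sphere_measure)"
    by (rule polar_nn[OF R fm])
  also have "\<dots> = (\<integral>\<^sup>+ \<theta>. ennreal (\<rho> \<theta> ^ (CARD('n) + m) / (CARD('n) + m) * G \<theta>) \<partial>sphere_measure)"
  proof (rule nn_integral_cong)
    fix \<theta> :: "real^'n" assume "\<theta> \<in> space sphere_measure"
    then have th: "\<theta> \<in> usphere" by (simp add: space_sm)
    show "(\<integral>\<^sup>+ r. f (r, \<theta>) \<partial>M1 CARD('n) R) = ennreal (\<rho> \<theta> ^ (CARD('n) + m) / (CARD('n) + m) * G \<theta>)"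
      unfolding f_def fst_conv snd_conv using inner_radial[of "CARD('n)" "\<rho> \<theta>" R "G \<theta>" m] th \<rho>pos \<rho>R Gpos by simp
  qed
  finally show ?thesis .
qed



lemma integrable_sm:
  assumes "continuous_on usphere (g :: real^'n \<Rightarrow> real)"
  shows "integrable sphere_measure g"
proof -
  obtain B where B: "\<forall>\<theta>\<in>usphere. \<bar>g \<theta>\<bar> \<le> B"
    using compact_imp_bounded[OF compact_continuous_image[OF assms compact_sphere]]
    by (auto simp: bounded_real)
  show ?thesis
  proof (rule finite_measure.integrable_const_bound[OF finite_sm])
    show "AE x in sphere_measure. norm (g x) \<le> B" using B by (auto simp: space_sm)
    show "g \<in> borel_measurable sphere_measure" by (rule cont_meas_sm[OF assms])
  qed
qed

lemma P_cont: "continuous_on (-{0}) (\<lambda>x::real^'n. x /\<^sub>R norm x)"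
  by (intro continuous_intros) auto

lemma Arho_open:
  assumes \<rho>c: "continuous_on usphere (\<rho> :: real^'n \<Rightarrow> real)"
  shows "open {x::real^'n. x \<noteq> 0 \<and> norm x < \<rho> (x /\<^sub>R norm x)}"
proof -
  have c: "continuous_on (-{0}) (\<lambda>x::real^'n. norm x - \<rho> (x /\<^sub>R norm x))"
  proof (intro continuous_intros)
    show "continuous_on (-{0}) (\<lambda>x::real^'n. \<rho> (x /\<^sub>R norm x))"
      by (rule continuous_on_compose2[OF \<rho>c P_cont]) (auto intro: P_in_sphere)
  qed
  have "open ((-{0}) \<inter> (\<lambda>x::real^'n. norm x - \<rho> (x /\<^sub>R norm x)) -` {..<0})"
    by (rule continuous_open_preimage[OF c]) auto
  also have "(-{0}) \<inter> (\<lambda>x::real^'n. norm x - \<rho> (x /\<^sub>R norm x)) -` {..<0} = {x. x \<noteq> 0 \<and> norm x < \<rho> (x /\<^sub>R norm x)}"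
    by auto
  finally show ?thesis .
qed

lemma Arho_sets:
  assumes "continuous_on usphere (\<rho> :: real^'n \<Rightarrow> real)"
  shows "{x::real^'n. x \<noteq> 0 \<and> norm x < \<rho> (x /\<^sub>R norm x)} \<in> sets lborel"
  using Arho_open[OF assms] by (simp add: borel_open)

lemma polar_measure:
  fixes \<rho> :: "real^'n \<Rightarrow> real"
  assumes \<rho>c: "continuous_on usphere \<rho>" and \<rho>pos: "\<forall>\<theta>\<in>usphere. 0 < \<rho> \<theta>"
  shows "emeasure lborel {x. x \<noteq> 0 \<and> norm x < \<rho> (x /\<^sub>R norm x)}
      = ennreal ((\<integral>\<theta>. \<rho> \<theta> ^ CARD('n) \<partial>sphere_measure) / CARD('n))"
proof -
  let ?A = "{x::real^'n. x \<noteq> 0 \<and> norm x < \<rho> (x /\<^sub>R norm x)}"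
  have "emeasure lborel ?A = (\<integral>\<^sup>+ x. indicator ?A x \<partial>lborel)"
    using Arho_sets[OF \<rho>c] by simp
  also have "\<dots> = (\<integral>\<^sup>+ x. ennreal (indicator ?A x * (norm x ^ 0 * 1)) \<partial>lborel)"
    by (intro nn_integral_cong) (simp add: indicator_def)
  also have "\<dots> = (\<integral>\<^sup>+ \<theta>. ennreal (\<rho> \<theta> ^ (CARD('n) + 0) / (CARD('n) + 0) * 1) \<partial>sphere_measure)"
    by (rule polar_A[OF \<rho>c \<rho>pos]) auto
  also have "\<dots> = (\<integral>\<^sup>+ \<theta>. ennreal (\<rho> \<theta> ^ CARD('n) / CARD('n)) \<partial>sphere_measure)"
    by simp
  also have "\<dots> = ennreal (\<integral>\<theta>. \<rho> \<theta> ^ CARD('n) / CARD('n) \<partial>sphere_measure)"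
  proof (rule nn_integral_eq_integral)
    show "integrable sphere_measure (\<lambda>\<theta>. \<rho> \<theta> ^ CARD('n) / real CARD('n))"
      by (intro integrable_sm continuous_intros \<rho>c) auto
    show "AE \<theta> in sphere_measure. 0 \<le> \<rho> \<theta> ^ CARD('n) / real CARD('n)"
      using \<rho>pos by (auto simp: space_sm less_imp_le)
  qed
  finally show ?thesis by simp
qed

lemma polar_coord:
  fixes \<rho> :: "real^'n \<Rightarrow> real"
  assumes \<rho>c: "continuous_on usphere \<rho>" and \<rho>pos: "\<forall>\<theta>\<in>usphere. 0 < \<rho> \<theta>"
  shows "has_bochner_integral lborel (\<lambda>x. indicator {x. x \<noteq> 0 \<and> norm x < \<rho> (x /\<^sub>R norm x)} x * x $ i)
      (\<integral>\<theta>. \<rho> \<theta> ^ (CARD('n) + 1) / (CARD('n) + 1) * \<theta> $ i \<partial>sphere_measure)"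
proof -
  let ?A = "{x::real^'n. x \<noteq> 0 \<and> norm x < \<rho> (x /\<^sub>R norm x)}"
  have As[measurable]: "?A \<in> sets lborel" by (rule Arho_sets[OF \<rho>c])
  define Gp where "Gp \<theta> = max 0 (\<theta> $ i)" for \<theta> :: "real^'n"
  define Gm where "Gm \<theta> = max 0 (- \<theta> $ i)" for \<theta> :: "real^'n"
  have Gc: "continuous_on usphere Gp" "continuous_on usphere Gm" unfolding Gp_def Gm_def
    by (intro continuous_intros)+
  have hb: "has_bochner_integral lborel (\<lambda>x. indicator ?A x * (norm x ^ 1 * G (x /\<^sub>R norm x)))
      (\<integral>\<theta>. \<rho> \<theta> ^ (CARD('n) + 1) / (CARD('n) + 1) * G \<theta> \<partial>sphere_measure)"
    if G: "G = Gp \<or> G = Gm" for G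
  proof (rule has_bochner_integral_nn_integral)
    have Gc': "continuous_on UNIV G" using G unfolding Gp_def Gm_def by (auto intro!: continuous_intros)
    have [measurable]: "G \<in> borel_measurable borel" by (rule borel_measurable_continuous_onI[OF Gc'])
    show "(\<lambda>x. indicator ?A x * (norm x ^ 1 * G (x /\<^sub>R norm x))) \<in> borel_measurable lborel"
      by measurable
    have G0: "\<And>\<theta>. 0 \<le> G \<theta>" using G by (auto simp: Gp_def Gm_def)
    show "AE x in lborel. 0 \<le> indicator ?A x * (norm x ^ 1 * G (x /\<^sub>R norm x))"
      using G0 by (auto simp: indicator_def)
    have int: "integrable sphere_measure (\<lambda>\<theta>. \<rho> \<theta> ^ (CARD('n) + 1) / (CARD('n) + 1) * G \<theta>)"
      by (intro integrable_sm continuous_intros \<rho>c continuous_on_subset[OF Gc'] subset_UNIV) auto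
    have nn: "AE \<theta> in sphere_measure. 0 \<le> \<rho> \<theta> ^ (CARD('n) + 1) / (CARD('n) + 1) * G \<theta>"
      using \<rho>pos G0 by (auto simp: space_sm less_imp_le)
    show "0 \<le> (\<integral>\<theta>. \<rho> \<theta> ^ (CARD('n) + 1) / (CARD('n) + 1) * G \<theta> \<partial>sphere_measure)"
      using nn by (rule integral_nonneg_AE)
    have "(\<integral>\<^sup>+ x. ennreal (indicator ?A x * (norm x ^ 1 * G (x /\<^sub>R norm x))) \<partial>lborel)
       = (\<integral>\<^sup>+ \<theta>. ennreal (\<rho> \<theta> ^ (CARD('n) + 1) / (CARD('n) + 1) * G \<theta>) \<partial>sphere_measure)"
      by (rule polar_A[OF \<rho>c \<rho>pos continuous_on_subset[OF Gc' subset_UNIV]]) (simp add: G0)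
    also have "\<dots> = ennreal (\<integral>\<theta>. \<rho> \<theta> ^ (CARD('n) + 1) / (CARD('n) + 1) * G \<theta> \<partial>sphere_measure)"
      by (rule nn_integral_eq_integral[OF int nn])
    finally show "(\<integral>\<^sup>+ x. ennreal (indicator ?A x * (norm x ^ 1 * G (x /\<^sub>R norm x))) \<partial>lborel)
       = ennreal (\<integral>\<theta>. \<rho> \<theta> ^ (CARD('n) + 1) / (CARD('n) + 1) * G \<theta> \<partial>sphere_measure)" .
  qed
  have "has_bochner_integral lborel (\<lambda>x. indicator ?A x * (norm x ^ 1 * Gp (x /\<^sub>R norm x)) - indicator ?A x * (norm x ^ 1 * Gm (x /\<^sub>R norm x)))
      ((\<integral>\<theta>. \<rho> \<theta> ^ (CARD('n) + 1) / (CARD('n) + 1) * Gp \<theta> \<partial>sphere_measure) - (\<integral>\<theta>. \<rho> \<theta> ^ (CARD('n) + 1) / (CARD('n) + 1) * Gm \<theta> \<partial>sphere_measure))"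
    by (intro has_bochner_integral_diff hb) auto
  moreover have "(\<lambda>x. indicator ?A x * (norm x ^ 1 * Gp (x /\<^sub>R norm x)) - indicator ?A x * (norm x ^ 1 * Gm (x /\<^sub>R norm x)))
      = (\<lambda>x. indicator ?A x * x $ i)"
  proof
    fix x :: "real^'n"
    show "indicator ?A x * (norm x ^ 1 * Gp (x /\<^sub>R norm x)) - indicator ?A x * (norm x ^ 1 * Gm (x /\<^sub>R norm x)) = indicator ?A x * x $ i"
    proof (cases "x = 0")
      case False
      then have "norm x * Gp (x /\<^sub>R norm x) - norm x * Gm (x /\<^sub>R norm x) = x $ i"
        by (auto simp: Gp_def Gm_def max_def field_simps)
      then show ?thesis by (simp add: right_diff_distrib[symmetric])
    qed simp
  qed
  moreover have "(\<integral>\<theta>. \<rho> \<theta> ^ (CARD('n) + 1) / (CARD('n) + 1) * Gp \<theta> \<partial>sphere_measure) - (\<integral>\<theta>. \<rho> \<theta> ^ (CARD('n) + 1) / (CARD('n) + 1) * Gm \<theta> \<partial>sphere_measure)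
      = (\<integral>\<theta>. \<rho> \<theta> ^ (CARD('n) + 1) / (CARD('n) + 1) * \<theta> $ i \<partial>sphere_measure)"
  proof -
    have "(\<integral>\<theta>. \<rho> \<theta> ^ (CARD('n) + 1) / (CARD('n) + 1) * Gp \<theta> \<partial>sphere_measure) - (\<integral>\<theta>. \<rho> \<theta> ^ (CARD('n) + 1) / (CARD('n) + 1) * Gm \<theta> \<partial>sphere_measure)
      = (\<integral>\<theta>. \<rho> \<theta> ^ (CARD('n) + 1) / (CARD('n) + 1) * Gp \<theta> - \<rho> \<theta> ^ (CARD('n) + 1) / (CARD('n) + 1) * Gm \<theta> \<partial>sphere_measure)"
    proof -
      have i1: "integrable sphere_measure (\<lambda>\<theta>. \<rho> \<theta> ^ (CARD('n) + 1) / (CARD('n) + 1) * Gp \<theta>)"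
        by (intro integrable_sm continuous_intros \<rho>c Gc) auto
      have i2: "integrable sphere_measure (\<lambda>\<theta>. \<rho> \<theta> ^ (CARD('n) + 1) / (CARD('n) + 1) * Gm \<theta>)"
        by (intro integrable_sm continuous_intros \<rho>c Gc) auto
      show ?thesis using Bochner_Integration.integral_diff[OF i1 i2] by simp
    qed
    also have "\<dots> = (\<integral>\<theta>. \<rho> \<theta> ^ (CARD('n) + 1) / (CARD('n) + 1) * \<theta> $ i \<partial>sphere_measure)"
      proof (rule Bochner_Integration.integral_cong)
        fix \<theta> :: "real^'n"
        have "Gp \<theta> - Gm \<theta> = \<theta> $ i" by (simp add: Gp_def Gm_def max_def)
        then show "\<rho> \<theta> ^ (CARD('n) + 1) / (CARD('n) + 1) * Gp \<theta> - \<rho> \<theta> ^ (CARD('n) + 1) / (CARD('n) + 1) * Gm \<theta> =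
            \<rho> \<theta> ^ (CARD('n) + 1) / (CARD('n) + 1) * \<theta> $ i"
          by (metis right_diff_distrib)
      qed simp
    finally show ?thesis .
  qed
  ultimately show ?thesis by simp
qed



lemma E_bound:
  fixes r0 :: real assumes r0: "r0 > 0"
  shows "\<exists>C. \<forall>u. \<bar>u\<bar> \<le> r0 \<longrightarrow> \<bar>(r0 + u) ^ n - r0 ^ n - real n * r0 ^ (n - 1) * u\<bar> \<le> C * u\<^sup>2"
proof (induction n)
  case 0
  show ?case by (rule exI[of _ 0]) simp
next
  case (Suc n)
  then obtain C where C: "\<And>u. \<bar>u\<bar> \<le> r0 \<Longrightarrow> \<bar>(r0 + u) ^ n - r0 ^ n - real n * r0 ^ (n - 1) * u\<bar> \<le> C * u\<^sup>2"
    by blast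
  show ?case
  proof (rule exI[of _ "2 * r0 * C + real n * r0 ^ (n - 1)"], intro allI impI)
    fix u :: real assume u: "\<bar>u\<bar> \<le> r0"
    define E where "E = (r0 + u) ^ n - r0 ^ n - real n * r0 ^ (n - 1) * u"
    have eq: "(r0 + u) ^ Suc n - r0 ^ Suc n - real (Suc n) * r0 ^ (Suc n - 1) * u
        = (r0 + u) * E + real n * r0 ^ (n - 1) * u\<^sup>2"
    proof (cases n)
      case 0 then show ?thesis by (simp add: E_def)
    next
      case (Suc k)
      then show ?thesis by (simp add: E_def algebra_simps power2_eq_square)
    qed
    have "\<bar>(r0 + u) * E\<bar> \<le> 2 * r0 * (C * u\<^sup>2)"
    proof -
      have "\<bar>(r0 + u) * E\<bar> = \<bar>r0 + u\<bar> * \<bar>E\<bar>" by (simp add: abs_mult)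
      also have "\<dots> \<le> (2 * r0) * (C * u\<^sup>2)"
        by (rule mult_mono) (use u C[OF u] in \<open>auto simp: E_def\<close>)
      finally show ?thesis .
    qed
    moreover have "\<bar>real n * r0 ^ (n - 1) * u\<^sup>2\<bar> = real n * r0 ^ (n - 1) * u\<^sup>2"
      using r0 by simp
    ultimately show "\<bar>(r0 + u) ^ Suc n - r0 ^ Suc n - real (Suc n) * r0 ^ (Suc n - 1) * u\<bar>
        \<le> (2 * r0 * C + real n * r0 ^ (n - 1)) * u\<^sup>2"
      unfolding eq by (simp add: algebra_simps)
  qed
qed

lemma pow_diff_lower:
  fixes r0 u :: real assumes r0: "r0 > 0" and a: "r0 + u > 0" and n: "n \<ge> 1"
  shows "\<bar>(r0 + u) ^ n - r0 ^ n\<bar> \<ge> \<bar>u\<bar> * r0 ^ (n - 1)"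
proof -
  have eq: "(r0 + u) ^ n - r0 ^ n = u * (\<Sum>i<n. r0 ^ (n - Suc i) * (r0 + u) ^ i)"
    using power_diff_sumr2[of "r0 + u" n r0] by simp
  have "r0 ^ (n - Suc 0) * (r0 + u) ^ 0 \<le> (\<Sum>i<n. r0 ^ (n - Suc i) * (r0 + u) ^ i)"
    by (rule member_le_sum) (use r0 a n in auto)
  then have s: "r0 ^ (n - 1) \<le> (\<Sum>i<n. r0 ^ (n - Suc i) * (r0 + u) ^ i)" by simp
  have "\<bar>u\<bar> * r0 ^ (n - 1) \<le> \<bar>u\<bar> * (\<Sum>i<n. r0 ^ (n - Suc i) * (r0 + u) ^ i)"
    by (rule mult_left_mono[OF s]) simp
  also have "\<dots> = \<bar>(r0 + u) ^ n - r0 ^ n\<bar>"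
    unfolding eq using s r0 by (simp add: abs_mult) (smt (verit) zero_less_power)
  finally show ?thesis .
qed

lemma C11_cont:
  assumes "C11_sphere \<phi>"
  shows "continuous_on usphere (\<phi> :: real^'n \<Rightarrow> real)"
proof -
  have "continuous_on usphere (hext \<phi>)"
    using assms unfolding C11_sphere_def
    by (intro continuous_at_imp_continuous_on ballI differentiable_imp_continuous_within) auto
  moreover have "\<And>x. x \<in> usphere \<Longrightarrow> hext \<phi> x = \<phi> x" by (simp add: hext_def)
  ultimately show ?thesis using continuous_on_cong by blast
qed

lemma lborel_uminus_vec: "distr lborel borel uminus = (lborel :: (real^'n) measure)"
  by (subst lborel_affine[of "-1" 0]) (auto simp: density_1 one_ennreal_def[symmetric])

lemma ball_coord_zero:
  fixes r :: real
  shows "(\<integral>x. indicator (ball (0::real^'n) r - {0}) x * x $ i \<partial>lborel) = 0"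
proof -
  let ?f = "\<lambda>x::real^'n. indicator (ball (0::real^'n) r - {0}) x * x $ i"
  have s: "ball (0::real^'n) r - {0} \<in> sets borel" by (intro borel_open) auto
  have c: "(\<lambda>x::real^'n. x $ i) \<in> borel_measurable borel"
    by (intro borel_measurable_continuous_onI continuous_intros)
  have [measurable]: "?f \<in> borel_measurable borel"
    by (intro borel_measurable_times borel_measurable_indicator[OF s] c)
  have "(\<integral>x. ?f x \<partial>lborel) = (\<integral>x. ?f x \<partial>distr lborel borel uminus)"
    by (simp add: lborel_uminus_vec)
  also have "\<dots> = (\<integral>x. ?f (- x) \<partial>lborel)"
    by (rule integral_distr) auto
  also have "\<dots> = (\<integral>x. - ?f x \<partial>lborel)"
    by (rule Bochner_Integration.integral_cong) (auto simp: indicator_def)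
  also have "\<dots> = - (\<integral>x. ?f x \<partial>lborel)" by simp
  finally show ?thesis by simp
qed



lemma L2_prod_int:
  assumes f: "L2_sphere (f :: real^'n \<Rightarrow> real)" and g: "L2_sphere g"
  shows "integrable sphere_measure (\<lambda>x. f x * g x)"
proof (rule Bochner_Integration.integrable_bound)
  show "integrable sphere_measure (\<lambda>x. (f x)\<^sup>2 + (g x)\<^sup>2)"
    using f g unfolding L2_sphere_def by auto
  show "(\<lambda>x. f x * g x) \<in> borel_measurable sphere_measure"
    using f g unfolding L2_sphere_def by auto
  show "AE x in sphere_measure. norm (f x * g x) \<le> norm ((f x)\<^sup>2 + (g x)\<^sup>2)"
  proof (rule AE_I2)
    fix x
    have "2 * \<bar>f x * g x\<bar> \<le> (f x)\<^sup>2 + (g x)\<^sup>2"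
      using sum_squares_bound[of "\<bar>f x\<bar>" "\<bar>g x\<bar>"] by (simp add: abs_mult power2_eq_square)
    moreover have "0 \<le> (f x)\<^sup>2 + (g x)\<^sup>2" by simp
    ultimately show "norm (f x * g x) \<le> norm ((f x)\<^sup>2 + (g x)\<^sup>2)" by simp
  qed
qed

lemma parseval:
  fixes S :: "nat \<Rightarrow> (real^'n) \<Rightarrow> real"
  assumes S_L2: "\<And>k. L2_sphere (S k)"
    and S_orth: "\<And>j k. L2_inner (S j) (S k) = (if j = k then 1 else 0)"
    and S_complete: "\<And>f. L2_sphere f \<Longrightarrow>
          (\<lambda>n. L2_norm_sq (\<lambda>x. f x - (\<Sum>k<n. L2_inner f (S k) * S k x))) \<longlonglongrightarrow> 0"
    and f: "L2_sphere f"
  shows "(\<lambda>k. (L2_inner f (S k))\<^sup>2) sums L2_norm_sq f"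
proof -
  define c where "c k = L2_inner f (S k)" for k
  have ifS: "integrable sphere_measure (\<lambda>x. f x * S k x)" for k by (rule L2_prod_int[OF f S_L2])
  have iSS: "integrable sphere_measure (\<lambda>x. S j x * S k x)" for j k by (rule L2_prod_int[OF S_L2 S_L2])
  have iff: "integrable sphere_measure (\<lambda>x. (f x)\<^sup>2)" using f by (simp add: L2_sphere_def)
  have key: "L2_norm_sq (\<lambda>x. f x - (\<Sum>k<n. c k * S k x)) = L2_norm_sq f - (\<Sum>k<n. (c k)\<^sup>2)" for n
  proof -
    have pw: "(f x - (\<Sum>k<n. c k * S k x))\<^sup>2 = (f x)\<^sup>2 - 2 * (\<Sum>k<n. c k * (f x * S k x))
        + (\<Sum>j<n. \<Sum>k<n. c j * c k * (S j x * S k x))" for x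
    proof -
      have "f x * (\<Sum>k<n. c k * S k x) = (\<Sum>k<n. c k * (f x * S k x))"
        by (simp add: sum_distrib_left algebra_simps)
      moreover have "(\<Sum>k<n. c k * S k x) * (\<Sum>k<n. c k * S k x) = (\<Sum>j<n. \<Sum>k<n. c j * c k * (S j x * S k x))"
        by (simp add: sum_product algebra_simps)
      ultimately show ?thesis by (simp add: power2_eq_square algebra_simps)
    qed
    have "L2_norm_sq (\<lambda>x. f x - (\<Sum>k<n. c k * S k x)) =
        (\<integral>x. (f x)\<^sup>2 - 2 * (\<Sum>k<n. c k * (f x * S k x)) + (\<Sum>j<n. \<Sum>k<n. c j * c k * (S j x * S k x)) \<partial>sphere_measure)"
      unfolding L2_norm_sq_def pw ..
    also have "\<dots> = (\<integral>x. (f x)\<^sup>2 \<partial>sphere_measure) - 2 * (\<Sum>k<n. c k * (\<integral>x. f x * S k x \<partial>sphere_measure))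
        + (\<Sum>j<n. \<Sum>k<n. c j * c k * (\<integral>x. S j x * S k x \<partial>sphere_measure))"
      using iff ifS iSS by (simp add: Bochner_Integration.integral_sum Bochner_Integration.integral_diff
          Bochner_Integration.integral_add)
    also have "\<dots> = L2_norm_sq f - (\<Sum>k<n. (c k)\<^sup>2)"
    proof -
      have "(\<Sum>k<n. c k * (\<integral>x. f x * S k x \<partial>sphere_measure)) = (\<Sum>k<n. (c k)\<^sup>2)"
        by (simp add: c_def L2_inner_def power2_eq_square)
      moreover have "(\<Sum>j<n. \<Sum>k<n. c j * c k * (\<integral>x. S j x * S k x \<partial>sphere_measure)) = (\<Sum>k<n. (c k)\<^sup>2)"
      proof -
        have "(\<Sum>j<n. \<Sum>k<n. c j * c k * (\<integral>x. S j x * S k x \<partial>sphere_measure)) = (\<Sum>j<n. \<Sum>k<n. if j = k then c j * c k else 0)"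
          using S_orth unfolding L2_inner_def by (intro sum.cong) auto
        also have "\<dots> = (\<Sum>k<n. (c k)\<^sup>2)"
          by (simp add: power2_eq_square)
        finally show ?thesis .
      qed
      ultimately show ?thesis by (simp add: L2_norm_sq_def)
    qed
    finally show ?thesis .
  qed
  have "(\<lambda>n. L2_norm_sq f - (\<Sum>k<n. (c k)\<^sup>2)) \<longlonglongrightarrow> 0"
  proof -
    have key': "L2_norm_sq (\<lambda>x. f x - (\<Sum>k<n. L2_inner f (S k) * S k x)) = L2_norm_sq f - (\<Sum>k<n. (c k)\<^sup>2)" for n
      using key[of n] by (simp add: c_def)
    show ?thesis using S_complete[OF f] unfolding key' .
  qed
  then have "(\<lambda>n. L2_norm_sq f - (L2_norm_sq f - (\<Sum>k<n. (c k)\<^sup>2))) \<longlonglongrightarrow> L2_norm_sq f - 0"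
    by (intro tendsto_intros)
  then show ?thesis unfolding sums_def c_def by simp
qed



lemma Linf_facts:
  assumes "continuous_on usphere (\<phi> :: real^'n \<Rightarrow> real)"
  shows "\<And>\<theta>. \<theta> \<in> usphere \<Longrightarrow> \<bar>\<phi> \<theta>\<bar> \<le> Linf_sphere \<phi>" and "0 \<le> Linf_sphere \<phi>"
proof -
  have "bounded ((\<lambda>x. \<bar>\<phi> x\<bar>) ` usphere)"
    by (intro compact_imp_bounded compact_continuous_image continuous_intros assms compact_sphere)
  then have bdd: "bdd_above ((\<lambda>x. \<bar>\<phi> x\<bar>) ` usphere)" by (rule bounded_imp_bdd_above)
  show le: "\<bar>\<phi> \<theta>\<bar> \<le> Linf_sphere \<phi>" if "\<theta> \<in> usphere" for \<theta>
    unfolding Linf_sphere_def by (rule cSUP_upper[OF that bdd])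
  have "axis undefined 1 \<in> (usphere :: (real^'n) set)" by simp
  from le[OF this] show "0 \<le> Linf_sphere \<phi>" by linarith
qed

lemma ns_eq:
  assumes r0: "r0 > 0" and \<phi>: "\<forall>\<theta>\<in>usphere. \<bar>\<phi> \<theta>\<bar> \<le> r0 / 2"
  shows "ns_set r0 \<phi> = insert 0 {x::real^'n. x \<noteq> 0 \<and> norm x < r0 + \<phi> (x /\<^sub>R norm x)}"
proof (intro set_eqI iffI)
  fix x assume "x \<in> ns_set r0 \<phi>"
  then obtain t \<theta> where x: "x = t *\<^sub>R \<theta>" "\<theta> \<in> usphere" "0 \<le> t" "t < r0 + \<phi> \<theta>"
    unfolding ns_set_def by blast
  show "x \<in> insert 0 {x::real^'n. x \<noteq> 0 \<and> norm x < r0 + \<phi> (x /\<^sub>R norm x)}"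
  proof (cases "t = 0")
    case False
    then have t: "t > 0" using x by simp
    have "norm x = t" using x t by simp
    moreover have "x /\<^sub>R norm x = \<theta>" using x t by simp
    ultimately show ?thesis using x t by auto
  qed (use x in simp)
next
  fix x assume x: "x \<in> insert 0 {x::real^'n. x \<noteq> 0 \<and> norm x < r0 + \<phi> (x /\<^sub>R norm x)}"
  show "x \<in> ns_set r0 \<phi>"
  proof (cases "x = 0")
    case True
    have s: "axis undefined 1 \<in> (usphere :: (real^'n) set)" by simp
    then have "\<bar>\<phi> (axis undefined 1)\<bar> \<le> r0 / 2" using \<phi> by blast
    then have "0 < r0 + \<phi> (axis undefined 1)" using r0 by linarith
    then show ?thesis unfolding ns_set_def True
      using s by (intro CollectI exI[of _ 0] exI[of _ "axis undefined 1"]) auto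
  next
    case False
    then have "x = norm x *\<^sub>R (x /\<^sub>R norm x)" "x /\<^sub>R norm x \<in> usphere" "norm x < r0 + \<phi> (x /\<^sub>R norm x)"
      using x P_in_sphere by auto
    then show ?thesis unfolding ns_set_def
      by (intro CollectI exI[of _ "norm x"] exI[of _ "x /\<^sub>R norm x"]) auto
  qed
qed

lemma vol_eq:
  fixes \<rho> :: "real^'n \<Rightarrow> real"
  assumes \<rho>c: "continuous_on usphere \<rho>" and \<rho>pos: "\<forall>\<theta>\<in>usphere. 0 < \<rho> \<theta>"
  shows "measure lebesgue (insert 0 {x. x \<noteq> 0 \<and> norm x < \<rho> (x /\<^sub>R norm x)})
      = (\<integral>\<theta>. \<rho> \<theta> ^ CARD('n) \<partial>sphere_measure) / CARD('n)"
proof -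
  let ?A = "{x::real^'n. x \<noteq> 0 \<and> norm x < \<rho> (x /\<^sub>R norm x)}"
  have As: "?A \<in> sets lborel" by (rule Arho_sets[OF \<rho>c])
  then have As': "insert 0 ?A \<in> sets lborel" by simp
  have "emeasure lebesgue (insert 0 ?A) = emeasure lborel (insert 0 ?A)"
    using As' by simp
  also have "\<dots> = emeasure lborel (?A \<union> {0})" by simp
  also have "\<dots> = emeasure lborel ?A"
    by (rule emeasure_Un_null_set[OF As]) (auto simp: null_sets_def)
  also have "\<dots> = ennreal ((\<integral>\<theta>. \<rho> \<theta> ^ CARD('n) \<partial>sphere_measure) / CARD('n))"
    by (rule polar_measure[OF \<rho>c \<rho>pos])
  finally have "emeasure lebesgue (insert 0 ?A) = ennreal ((\<integral>\<theta>. \<rho> \<theta> ^ CARD('n) \<partial>sphere_measure) / CARD('n))" .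
  moreover have "0 \<le> (\<integral>\<theta>. \<rho> \<theta> ^ CARD('n) \<partial>sphere_measure) / CARD('n)"
    using \<rho>pos by (intro divide_nonneg_nonneg integral_nonneg_AE) (auto simp: space_sm less_imp_le)
  ultimately show ?thesis by (simp add: measure_def)
qed

lemma coord_eq:
  fixes \<rho> :: "real^'n \<Rightarrow> real"
  assumes \<rho>c: "continuous_on usphere \<rho>" and \<rho>pos: "\<forall>\<theta>\<in>usphere. 0 < \<rho> \<theta>"
  shows "(set_lebesgue_integral lebesgue (insert 0 {x. x \<noteq> 0 \<and> norm x < \<rho> (x /\<^sub>R norm x)}) (\<lambda>x. x)) $ i
      = (\<integral>\<theta>. \<rho> \<theta> ^ (CARD('n) + 1) / (CARD('n) + 1) * \<theta> $ i \<partial>sphere_measure)"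
proof -
  let ?A = "{x::real^'n. x \<noteq> 0 \<and> norm x < \<rho> (x /\<^sub>R norm x)}"
  have As: "?A \<in> sets lborel" by (rule Arho_sets[OF \<rho>c])
  then have As': "insert 0 ?A \<in> sets lborel" by simp
  obtain B where B: "\<forall>\<theta>\<in>usphere. \<bar>\<rho> \<theta>\<bar> \<le> B"
    using compact_imp_bounded[OF compact_continuous_image[OF \<rho>c compact_sphere]]
    by (auto simp: bounded_real)
  have sub: "insert 0 ?A \<subseteq> cball 0 \<bar>B\<bar>"
  proof
    fix x assume "x \<in> insert 0 ?A"
    then show "x \<in> cball 0 \<bar>B\<bar>"
    proof
      assume "x \<in> ?A"
      then have "norm x < \<rho> (x /\<^sub>R norm x)" "x /\<^sub>R norm x \<in> usphere" using P_in_sphere by auto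
      moreover then have "\<bar>\<rho> (x /\<^sub>R norm x)\<bar> \<le> B" using B by blast
      ultimately show ?thesis by (simp add: dist_norm)
    qed simp
  qed
  have fm: "(\<lambda>x. indicator (insert 0 ?A) x *\<^sub>R x) \<in> borel_measurable lborel"
    using As' by measurable
  have fi: "integrable lborel (\<lambda>x. indicator (insert 0 ?A) x *\<^sub>R x)"
  proof (rule Bochner_Integration.integrable_bound)
    show "integrable lborel (\<lambda>x. indicator (cball (0::real^'n) \<bar>B\<bar>) x * \<bar>B\<bar>)"
      by (intro integrable_mult_left integrable_real_indicator emeasure_bounded_finite) auto
    show "(\<lambda>x. indicator (insert 0 ?A) x *\<^sub>R x) \<in> borel_measurable lborel" by (rule fm)
    show "AE x in lborel. norm (indicator (insert 0 ?A) x *\<^sub>R x) \<le> norm (indicator (cball (0::real^'n) \<bar>B\<bar>) x * \<bar>B\<bar>)"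
      using sub by (intro AE_I2) (auto simp: indicator_def)
  qed
  have "set_lebesgue_integral lebesgue (insert 0 ?A) (\<lambda>x. x) = (\<integral>x. indicator (insert 0 ?A) x *\<^sub>R x \<partial>lborel)"
    unfolding set_lebesgue_integral_def by (rule integral_completion[OF fm])
  then have "(set_lebesgue_integral lebesgue (insert 0 ?A) (\<lambda>x. x)) $ i = (\<integral>x. (indicator (insert 0 ?A) x *\<^sub>R x) $ i \<partial>lborel)"
    using integral_bounded_linear[OF bounded_linear_vec_nth fi] by simp
  also have "\<dots> = (\<integral>x. indicator ?A x * x $ i \<partial>lborel)"
    by (rule Bochner_Integration.integral_cong) (auto simp: indicator_def)
  also have "\<dots> = (\<integral>\<theta>. \<rho> \<theta> ^ (CARD('n) + 1) / (CARD('n) + 1) * \<theta> $ i \<partial>sphere_measure)"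
    using polar_coord[OF \<rho>c \<rho>pos, of i] by (simp add: has_bochner_integral_iff)
  finally show ?thesis .
qed



lemma aux_Q: "(c::real) \<noteq> 0 \<Longrightarrow> d \<noteq> 0 \<Longrightarrow> (A - B) / (c * d) * x = (A / c * x - B / c * x) / d"
  by (simp add: field_simps)

lemma aux_d: "(D::real) \<noteq> 0 \<Longrightarrow> (X - Y) / D - u = (X - Y - D * u) / D"
  by (simp add: field_simps)

lemma aux_e:
  assumes D: "(D::real) > 0" and E: "\<bar>E\<bar> \<le> C * w"
  shows "\<bar>E / D\<bar> \<le> C / D * w"
proof -
  have "\<bar>E / D\<bar> = \<bar>E\<bar> / D" using D by (simp add: abs_divide)
  also have "\<dots> \<le> C * w / D" by (rule divide_right_mono[OF E]) (use D in simp)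
  finally show ?thesis by simp
qed

lemma aux_low:
  fixes r0 u X :: real and N :: nat
  assumes r0: "r0 > 0" and N: "N \<ge> 1" and low: "\<bar>X\<bar> \<ge> \<bar>u\<bar> * r0 ^ (N - 1)"
    and p: "p = X / (real N * r0 ^ (N - 1))"
  shows "\<bar>u\<bar> \<le> real N * \<bar>p\<bar>"
proof -
  have rp: "r0 ^ (N - 1) > 0" using r0 by simp
  have "real N * \<bar>p\<bar> = \<bar>X\<bar> / r0 ^ (N - 1)" using N rp unfolding p by (simp add: abs_divide abs_mult)
  also have "\<dots> \<ge> \<bar>u\<bar>" using low rp by (simp add: le_divide_eq)
  finally show ?thesis .
qed

theorem mainTheorem15:
  fixes r0 :: real and S :: "nat \<Rightarrow> (real^'n) \<Rightarrow> real" and \<sigma> :: "nat \<Rightarrow> real"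
    and b :: "nat \<Rightarrow> 'n"
  assumes dim: "CARD('n) \<ge> 2"
    and r0: "r0 > 0" "measure lebesgue (ball (0::real^'n) r0) = 1"
    and S_L2: "\<And>k. L2_sphere (S k)"
    and S_orth: "\<And>j k. L2_inner (S j) (S k) = (if j = k then 1 else 0)"
    and S_complete: "\<And>f. L2_sphere f \<Longrightarrow>
          (\<lambda>n. L2_norm_sq (\<lambda>x. f x - (\<Sum>k<n. L2_inner f (S k) * S k x))) \<longlonglongrightarrow> 0"
    and S_eigen: "\<And>k. \<forall>x\<in>usphere. sph_laplacian (S k) x = - \<sigma> k * S k x"
    and \<sigma>_0: "\<sigma> 0 = 0"
    and \<sigma>_1N: "\<And>k. 1 \<le> k \<Longrightarrow> k \<le> CARD('n) \<Longrightarrow> \<sigma> k = real CARD('n) - 1"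
    and \<sigma>_gap: "real CARD('n) - 1 < \<sigma> (CARD('n) + 1)"
    and \<sigma>_mono: "mono \<sigma>"
    and S_0: "\<exists>c. \<forall>x\<in>usphere. S 0 x = c"
    and b_bij: "bij_betw b {1..CARD('n)} UNIV"
    and S_coord: "\<And>k. 1 \<le> k \<Longrightarrow> k \<le> CARD('n) \<Longrightarrow>
          \<exists>a>0. \<forall>x\<in>usphere. S k x = a * x $ b k"
  shows "\<exists>\<delta>>0. \<exists>\<eta>. modulus \<eta> \<and>
    (\<forall>\<phi>. C11_sphere \<phi> \<and> Linf_sphere \<phi> \<le> r0 / 2
        \<and> measure lebesgue (ns_set r0 \<phi>) = 1 \<and> barycenter (ns_set r0 \<phi>) = 0
        \<and> C11_norm \<phi> < \<delta> \<longrightarrow>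
      L2_inner (psi_fun r0 \<phi>) (S 0) = 0 \<and>
      (\<exists>e. \<bar>e\<bar> \<le> \<eta> (Linf_sphere \<phi>) \<and>
        infsum (\<lambda>k. (L2_inner (psi_fun r0 \<phi>) (S k))\<^sup>2) {CARD('n) + 1..}
          = L2_norm_sq (psi_fun r0 \<phi>) * (1 + e)))"
proof -
  let ?N = "CARD('n)"
  have N1: "?N \<ge> 1" using dim by simp
  obtain CN where CN: "\<And>u. \<bar>u\<bar> \<le> r0 \<Longrightarrow> \<bar>(r0 + u) ^ ?N - r0 ^ ?N - real ?N * r0 ^ (?N - 1) * u\<bar> \<le> CN * u\<^sup>2"
    using E_bound[OF r0(1), of ?N] by blast
  obtain CN1 where CN1: "\<And>u. \<bar>u\<bar> \<le> r0 \<Longrightarrow> \<bar>(r0 + u) ^ (?N + 1) - r0 ^ (?N + 1) - real (?N + 1) * r0 ^ (?N + 1 - 1) * u\<bar> \<le> CN1 * u\<^sup>2"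
    using E_bound[OF r0(1), of "?N + 1"] by blast
  define K1 where "K1 = CN / (real ?N * r0 ^ (?N - 1)) + CN1 / (real (?N + 1) * r0 ^ ?N)"
  define a where "a k = (SOME a. a > 0 \<and> (\<forall>x\<in>usphere. S k x = a * x $ b k))" for k
  have a: "\<And>x. x \<in> usphere \<Longrightarrow> S k x = a k * x $ b k" if "1 \<le> k" "k \<le> ?N" for k
    using someI_ex[OF S_coord[OF that]] unfolding a_def by blast
  define Msm where "Msm = measure sphere_measure (space (sphere_measure :: (real^'n) measure))"
  define Kc where "Kc = (\<Sum>k\<in>{1..?N}. (a k)\<^sup>2) * K1\<^sup>2 * Msm * (real ?N)\<^sup>2"
  have Kc0: "0 \<le> Kc" unfolding Kc_def Msm_def by (intro mult_nonneg_nonneg sum_nonneg) auto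
  define \<eta> where "\<eta> = (\<lambda>t::real. Kc * t\<^sup>2)"
  have mod: "modulus \<eta>"
    unfolding modulus_def
  proof (intro conjI allI impI)
    show "\<eta> 0 = 0" by (simp add: \<eta>_def)
    fix t :: real assume "0 \<le> t" then show "0 \<le> \<eta> t" using Kc0 by (simp add: \<eta>_def)
  next
    show "mono_on {0..} \<eta>" by (rule mono_onI) (auto simp: \<eta>_def intro!: mult_left_mono power_mono Kc0)
    have "((\<lambda>t. Kc * t\<^sup>2) \<longlongrightarrow> Kc * 0\<^sup>2) (at_right 0)" by (intro tendsto_intros)
    then show "(\<eta> \<longlongrightarrow> 0) (at_right 0)" by (simp add: \<eta>_def)
  qed
  have main: "L2_inner (psi_fun r0 \<phi>) (S 0) = 0 \<and> (\<exists>e. \<bar>e\<bar> \<le> \<eta> (Linf_sphere \<phi>) \<and>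
        infsum (\<lambda>k. (L2_inner (psi_fun r0 \<phi>) (S k))\<^sup>2) {?N + 1..} = L2_norm_sq (psi_fun r0 \<phi>) * (1 + e))"
    if C11: "C11_sphere \<phi>" and Linf: "Linf_sphere \<phi> \<le> r0 / 2"
      and meas1: "measure lebesgue (ns_set r0 \<phi>) = 1" and bar: "barycenter (ns_set r0 \<phi>) = 0" for \<phi>
  proof -
    define t where "t = Linf_sphere \<phi>"
    define \<psi> where "\<psi> = psi_fun r0 \<phi>"
    have \<phi>c: "continuous_on usphere \<phi>" by (rule C11_cont[OF C11])
    have \<phi>t: "\<And>\<theta>. \<theta> \<in> usphere \<Longrightarrow> \<bar>\<phi> \<theta>\<bar> \<le> t" and t0: "0 \<le> t"
      using Linf_facts[OF \<phi>c] by (auto simp: t_def)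
    have \<phi>r: "\<forall>\<theta>\<in>usphere. \<bar>\<phi> \<theta>\<bar> \<le> r0 / 2" using \<phi>t Linf unfolding t_def by force
    have \<rho>c: "continuous_on usphere (\<lambda>\<theta>. r0 + \<phi> \<theta>)" by (intro continuous_intros \<phi>c)
    have \<rho>pos: "\<forall>\<theta>\<in>usphere. 0 < r0 + \<phi> \<theta>"
    proof
      fix \<theta> :: "real^'n" assume "\<theta> \<in> usphere"
      then have "\<bar>\<phi> \<theta>\<bar> \<le> r0 / 2" using \<phi>r by blast
      then show "0 < r0 + \<phi> \<theta>" using r0 by linarith
    qed
    have c0c: "continuous_on usphere (\<lambda>\<theta>::real^'n. r0)" by simp
    have r0pos: "\<forall>\<theta>\<in>(usphere::(real^'n) set). 0 < r0" using r0 by simp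
    have nsA: "ns_set r0 \<phi> = insert 0 {x. x \<noteq> 0 \<and> norm x < r0 + \<phi> (x /\<^sub>R norm x)}"
      by (rule ns_eq[OF r0(1) \<phi>r])
    have ballA: "ball (0::real^'n) r0 = insert 0 {x. x \<noteq> 0 \<and> norm x < r0}" using r0 by auto
    have V1: "(\<integral>\<theta>. (r0 + \<phi> \<theta>) ^ ?N \<partial>sphere_measure) / ?N = 1"
      using vol_eq[OF \<rho>c \<rho>pos] meas1 nsA by metis
    have V0: "(\<integral>\<theta>. r0 ^ ?N \<partial>(sphere_measure::(real^'n) measure)) / ?N = 1"
      using vol_eq[OF c0c r0pos] r0(2) ballA by metis
    have ir0: "r0 ^ (?N - 1) \<noteq> 0" using r0 by simp
    have ipow: "integrable sphere_measure (\<lambda>\<theta>. (r0 + \<phi> \<theta>) ^ k)" for k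
      by (intro integrable_sm continuous_intros \<phi>c)
    have \<psi>c: "continuous_on usphere \<psi>" unfolding \<psi>_def psi_fun_def
      by (intro continuous_intros \<phi>c) (use r0 in auto)
    have \<psi>L2: "L2_sphere \<psi>" unfolding L2_sphere_def
      using \<psi>c by (auto intro!: cont_meas_sm integrable_sm continuous_intros)
    have int\<psi>: "(\<integral>\<theta>. \<psi> \<theta> \<partial>sphere_measure) = 0"
    proof -
      have "(\<integral>\<theta>. \<psi> \<theta> \<partial>sphere_measure)
          = (\<integral>\<theta>. (r0 + \<phi> \<theta>) ^ ?N - r0 ^ ?N \<partial>sphere_measure) / (real ?N * r0 ^ (?N - 1))"
        unfolding \<psi>_def psi_fun_def by (rule integral_divide_zero)
      also have "(\<integral>\<theta>. (r0 + \<phi> \<theta>) ^ ?N - r0 ^ ?N \<partial>sphere_measure)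
          = (\<integral>\<theta>. (r0 + \<phi> \<theta>) ^ ?N \<partial>sphere_measure) - (\<integral>\<theta>. r0 ^ ?N \<partial>(sphere_measure::(real^'n) measure))"
        by (rule Bochner_Integration.integral_diff[OF ipow]) (intro integrable_sm continuous_intros)
      also have "\<dots> = 0" using V1 V0 N1 by (simp add: divide_eq_1_iff)
      finally show ?thesis by simp
    qed
    have c0: "L2_inner \<psi> (S 0) = 0"
    proof -
      obtain cS where cS: "\<forall>x\<in>usphere. S 0 x = cS" using S_0 by blast
      have "L2_inner \<psi> (S 0) = (\<integral>\<theta>. \<psi> \<theta> * cS \<partial>sphere_measure)"
        unfolding L2_inner_def by (rule Bochner_Integration.integral_cong) (auto simp: space_sm cS)
      also have "\<dots> = 0" using int\<psi> by simp
      finally show ?thesis .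
    qed
    have bar0: "set_lebesgue_integral lebesgue (ns_set r0 \<phi>) (\<lambda>x. x) = 0"
      using bar meas1 unfolding barycenter_def by simp
    have J\<rho>: "(\<integral>\<theta>. (r0 + \<phi> \<theta>) ^ (?N + 1) / (?N + 1) * \<theta> $ i \<partial>sphere_measure) = 0" for i
      using coord_eq[OF \<rho>c \<rho>pos, of i] bar0 nsA by simp
    have J0: "(\<integral>\<theta>. r0 ^ (?N + 1) / (?N + 1) * \<theta> $ i \<partial>(sphere_measure::(real^'n) measure)) = 0" for i
    proof -
      have "{x::real^'n. x \<noteq> 0 \<and> norm x < r0} = ball 0 r0 - {0}" by auto
      then have "has_bochner_integral lborel (\<lambda>x. indicator (ball (0::real^'n) r0 - {0}) x * x $ i)
          (\<integral>\<theta>. r0 ^ (?N + 1) / (?N + 1) * \<theta> $ i \<partial>(sphere_measure::(real^'n) measure))"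
        using polar_coord[OF c0c r0pos, of i] by simp
      then show ?thesis using ball_coord_zero[of r0 i] by (simp add: has_bochner_integral_iff)
    qed
    define Q where "Q \<theta> = ((r0 + \<phi> \<theta>) ^ (?N + 1) - r0 ^ (?N + 1)) / (real (?N + 1) * r0 ^ ?N)" for \<theta>
    have Qc: "continuous_on usphere Q" unfolding Q_def
      by (intro continuous_intros \<phi>c) (use r0 in auto)
    have comp_c: "continuous_on usphere (\<lambda>\<theta>::real^'n. \<theta> $ i)" for i by (intro continuous_intros)
    have Q0: "(\<integral>\<theta>. Q \<theta> * \<theta> $ i \<partial>sphere_measure) = 0" for i
    proof -
      have "(\<integral>\<theta>. Q \<theta> * \<theta> $ i \<partial>sphere_measure) = (\<integral>\<theta>. ((r0 + \<phi> \<theta>) ^ (?N + 1) / (?N + 1) * \<theta> $ i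
           - r0 ^ (?N + 1) / (?N + 1) * \<theta> $ i) / r0 ^ ?N \<partial>sphere_measure)"
        unfolding Q_def
      proof (rule Bochner_Integration.integral_cong)
        fix \<theta> :: "real^'n"
        show "((r0 + \<phi> \<theta>) ^ (?N + 1) - r0 ^ (?N + 1)) / (real (?N + 1) * r0 ^ ?N) * \<theta> $ i =
          ((r0 + \<phi> \<theta>) ^ (?N + 1) / (?N + 1) * \<theta> $ i - r0 ^ (?N + 1) / (?N + 1) * \<theta> $ i) / r0 ^ ?N"
          by (rule aux_Q) (use r0 in auto)
      qed simp
      also have "\<dots> = ((\<integral>\<theta>. (r0 + \<phi> \<theta>) ^ (?N + 1) / (?N + 1) * \<theta> $ i \<partial>sphere_measure)
           - (\<integral>\<theta>. r0 ^ (?N + 1) / (?N + 1) * \<theta> $ i \<partial>(sphere_measure::(real^'n) measure))) / r0 ^ ?N"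
        by (subst integral_divide_zero, subst Bochner_Integration.integral_diff)
          (auto intro!: integrable_sm continuous_intros \<phi>c)
      also have "\<dots> = 0" by (simp only: J\<rho> J0) simp
      finally show ?thesis .
    qed
    define I2 where "I2 = (\<integral>\<theta>. (\<phi> \<theta>)\<^sup>2 \<partial>sphere_measure)"
    have i\<phi>2: "integrable sphere_measure (\<lambda>\<theta>. (\<phi> \<theta>)\<^sup>2)" by (intro integrable_sm continuous_intros \<phi>c)
    have I2nn: "0 \<le> I2" unfolding I2_def by (rule integral_nonneg_AE) auto
    have ur: "\<bar>\<phi> \<theta>\<bar> \<le> r0" if "\<theta> \<in> usphere" for \<theta> using \<phi>r that r0 by force
    have \<psi>Q: "\<bar>\<psi> \<theta> - Q \<theta>\<bar> \<le> K1 * (\<phi> \<theta>)\<^sup>2" if \<theta>: "\<theta> \<in> usphere" for \<theta>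
    proof -
      have D1: "real ?N * r0 ^ (?N - 1) > 0" using r0 N1 by simp
      have D2: "real (?N + 1) * r0 ^ (?N + 1 - 1) > 0" using r0 by simp
      have d1: "\<psi> \<theta> - \<phi> \<theta> = ((r0 + \<phi> \<theta>) ^ ?N - r0 ^ ?N - real ?N * r0 ^ (?N - 1) * \<phi> \<theta>) / (real ?N * r0 ^ (?N - 1))"
        unfolding \<psi>_def psi_fun_def by (rule aux_d) (use D1 in linarith)
      have d2: "Q \<theta> - \<phi> \<theta> = ((r0 + \<phi> \<theta>) ^ (?N + 1) - r0 ^ (?N + 1) - real (?N + 1) * r0 ^ (?N + 1 - 1) * \<phi> \<theta>) / (real (?N + 1) * r0 ^ (?N + 1 - 1))"
      proof -
        have eqp: "?N + 1 - 1 = ?N" by simp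
        show ?thesis unfolding Q_def eqp by (rule aux_d) (use r0 in simp)
      qed
      have e1: "\<bar>\<psi> \<theta> - \<phi> \<theta>\<bar> \<le> CN / (real ?N * r0 ^ (?N - 1)) * (\<phi> \<theta>)\<^sup>2"
        unfolding d1 by (rule aux_e[OF D1 CN[OF ur[OF \<theta>]]])
      have e2: "\<bar>Q \<theta> - \<phi> \<theta>\<bar> \<le> CN1 / (real (?N + 1) * r0 ^ (?N + 1 - 1)) * (\<phi> \<theta>)\<^sup>2"
        unfolding d2 by (rule aux_e[OF D2 CN1[OF ur[OF \<theta>]]])
      have "\<bar>\<psi> \<theta> - Q \<theta>\<bar> \<le> \<bar>\<psi> \<theta> - \<phi> \<theta>\<bar> + \<bar>Q \<theta> - \<phi> \<theta>\<bar>" by linarith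
      also have "\<dots> \<le> K1 * (\<phi> \<theta>)\<^sup>2" using e1 e2 by (simp add: K1_def algebra_simps)
      finally show ?thesis .
    qed
    have \<psi>x_int: "integrable sphere_measure (\<lambda>\<theta>. \<psi> \<theta> * \<theta> $ i)" for i
      by (intro integrable_sm continuous_intros \<psi>c)
    have Qx_int: "integrable sphere_measure (\<lambda>\<theta>. Q \<theta> * \<theta> $ i)" for i
      by (intro integrable_sm continuous_intros Qc)
    have Dbound: "\<bar>\<integral>\<theta>. \<psi> \<theta> * \<theta> $ i \<partial>sphere_measure\<bar> \<le> K1 * I2" for i
    proof -
      have "(\<integral>\<theta>. \<psi> \<theta> * \<theta> $ i \<partial>sphere_measure) = (\<integral>\<theta>. \<psi> \<theta> * \<theta> $ i \<partial>sphere_measure) - (\<integral>\<theta>. Q \<theta> * \<theta> $ i \<partial>sphere_measure)"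
        using Q0[of i] by simp
      also have "\<dots> = (\<integral>\<theta>. \<psi> \<theta> * \<theta> $ i - Q \<theta> * \<theta> $ i \<partial>sphere_measure)"
        by (rule Bochner_Integration.integral_diff[symmetric, OF \<psi>x_int Qx_int])
      finally have eq: "(\<integral>\<theta>. \<psi> \<theta> * \<theta> $ i \<partial>sphere_measure) = (\<integral>\<theta>. \<psi> \<theta> * \<theta> $ i - Q \<theta> * \<theta> $ i \<partial>sphere_measure)" .
      have "\<bar>\<integral>\<theta>. \<psi> \<theta> * \<theta> $ i - Q \<theta> * \<theta> $ i \<partial>sphere_measure\<bar> \<le> (\<integral>\<theta>. K1 * (\<phi> \<theta>)\<^sup>2 \<partial>sphere_measure)"
      proof (rule integral_abs_bound_integral)
        show "integrable sphere_measure (\<lambda>\<theta>. \<psi> \<theta> * \<theta> $ i - Q \<theta> * \<theta> $ i)"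
          using \<psi>x_int Qx_int by auto
        show "integrable sphere_measure (\<lambda>\<theta>. K1 * (\<phi> \<theta>)\<^sup>2)" using i\<phi>2 by auto
        fix \<theta> :: "real^'n" assume "\<theta> \<in> space sphere_measure"
        then have \<theta>: "\<theta> \<in> usphere" by (simp add: space_sm)
        have c1: "\<bar>\<theta> $ i\<bar> \<le> 1" using component_le_norm_cart[of \<theta> i] \<theta> by simp
        have "\<bar>\<psi> \<theta> * \<theta> $ i - Q \<theta> * \<theta> $ i\<bar> = \<bar>\<psi> \<theta> - Q \<theta>\<bar> * \<bar>\<theta> $ i\<bar>"
          by (simp add: left_diff_distrib[symmetric] abs_mult)
        also have "\<dots> \<le> \<bar>\<psi> \<theta> - Q \<theta>\<bar> * 1" by (rule mult_left_mono[OF c1]) simp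
        also have "\<dots> \<le> K1 * (\<phi> \<theta>)\<^sup>2" using \<psi>Q[OF \<theta>] by simp
        finally show "\<bar>\<psi> \<theta> * \<theta> $ i - Q \<theta> * \<theta> $ i\<bar> \<le> K1 * (\<phi> \<theta>)\<^sup>2" .
      qed
      also have "\<dots> = K1 * I2" unfolding I2_def by simp
      finally show ?thesis unfolding eq .
    qed
    have I2t: "I2 \<le> t\<^sup>2 * Msm"
    proof -
      have "I2 \<le> (\<integral>\<theta>. t\<^sup>2 \<partial>(sphere_measure::(real^'n) measure))"
        unfolding I2_def
      proof (rule Bochner_Integration.integral_mono)
        show "integrable sphere_measure (\<lambda>\<theta>. (\<phi> \<theta>)\<^sup>2)" by (rule i\<phi>2)
        show "integrable sphere_measure (\<lambda>\<theta>::real^'n. t\<^sup>2)" by (intro integrable_sm continuous_intros)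
        fix \<theta> :: "real^'n" assume "\<theta> \<in> space sphere_measure"
        then have "\<bar>\<phi> \<theta>\<bar> \<le> t" using \<phi>t by (simp add: space_sm)
        then show "(\<phi> \<theta>)\<^sup>2 \<le> t\<^sup>2" by (metis abs_ge_zero power2_abs power_mono)
      qed
      also have "\<dots> = t\<^sup>2 * Msm" by (simp add: Msm_def)
      finally show ?thesis .
    qed
    have I2\<psi>: "I2 \<le> (real ?N)\<^sup>2 * L2_norm_sq \<psi>"
    proof -
      have "I2 \<le> (\<integral>\<theta>. (real ?N)\<^sup>2 * (\<psi> \<theta>)\<^sup>2 \<partial>sphere_measure)"
        unfolding I2_def
      proof (rule Bochner_Integration.integral_mono)
        show "integrable sphere_measure (\<lambda>\<theta>. (\<phi> \<theta>)\<^sup>2)" by (rule i\<phi>2)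
        show "integrable sphere_measure (\<lambda>\<theta>. (real ?N)\<^sup>2 * (\<psi> \<theta>)\<^sup>2)" by (intro integrable_sm continuous_intros \<psi>c)
        fix \<theta> :: "real^'n" assume "\<theta> \<in> space sphere_measure"
        then have \<theta>: "\<theta> \<in> usphere" by (simp add: space_sm)
        have low: "\<bar>(r0 + \<phi> \<theta>) ^ ?N - r0 ^ ?N\<bar> \<ge> \<bar>\<phi> \<theta>\<bar> * r0 ^ (?N - 1)"
          by (rule pow_diff_lower[OF r0(1) _ N1]) (use \<rho>pos \<theta> in auto)
        have "\<bar>\<phi> \<theta>\<bar> \<le> real ?N * \<bar>\<psi> \<theta>\<bar>"
          by (rule aux_low[OF r0(1) N1 low]) (simp add: \<psi>_def psi_fun_def)
        then show "(\<phi> \<theta>)\<^sup>2 \<le> (real ?N)\<^sup>2 * (\<psi> \<theta>)\<^sup>2"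
          by (metis abs_ge_zero power2_abs power_mono power_mult_distrib abs_mult abs_of_nat)
      qed
      also have "\<dots> = (real ?N)\<^sup>2 * L2_norm_sq \<psi>" by (simp add: L2_norm_sq_def)
      finally show ?thesis .
    qed
    define c where "c k = L2_inner \<psi> (S k)" for k
    have ck: "(c k)\<^sup>2 \<le> (a k)\<^sup>2 * (K1\<^sup>2 * (t\<^sup>2 * Msm) * ((real ?N)\<^sup>2 * L2_norm_sq \<psi>))" if k: "k \<in> {1..?N}" for k
    proof -
      have k1: "1 \<le> k" "k \<le> ?N" using k by auto
      define D where "D = (\<integral>\<theta>. \<psi> \<theta> * \<theta> $ b k \<partial>sphere_measure)"
      have "c k = (\<integral>\<theta>. a k * (\<psi> \<theta> * \<theta> $ b k) \<partial>sphere_measure)"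
        unfolding c_def L2_inner_def
        by (rule Bochner_Integration.integral_cong) (auto simp: space_sm a[OF k1])
      also have "\<dots> = a k * D" unfolding D_def by simp
      finally have ckD: "c k = a k * D" .
      have "D\<^sup>2 \<le> (K1 * I2)\<^sup>2"
        using Dbound[of "b k"] unfolding D_def[symmetric]
        by (metis abs_ge_zero power2_abs power_mono)
      also have "\<dots> = K1\<^sup>2 * (I2 * I2)" by (simp add: power2_eq_square)
      also have "\<dots> \<le> K1\<^sup>2 * ((t\<^sup>2 * Msm) * ((real ?N)\<^sup>2 * L2_norm_sq \<psi>))"
        by (intro mult_left_mono mult_mono I2t I2\<psi> I2nn) (auto intro: order_trans[OF I2nn I2t])
      finally have "D\<^sup>2 \<le> K1\<^sup>2 * (t\<^sup>2 * Msm * ((real ?N)\<^sup>2 * L2_norm_sq \<psi>))" by (simp add: mult.assoc)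
      then have "(a k)\<^sup>2 * D\<^sup>2 \<le> (a k)\<^sup>2 * (K1\<^sup>2 * (t\<^sup>2 * Msm * ((real ?N)\<^sup>2 * L2_norm_sq \<psi>)))"
        by (rule mult_left_mono) simp
      then show ?thesis unfolding ckD by (simp add: power_mult_distrib mult.assoc)
    qed
    define T where "T = (\<Sum>k\<in>{1..?N}. (c k)\<^sup>2)"
    have T0: "0 \<le> T" unfolding T_def by (rule sum_nonneg) simp
    have Tb: "T \<le> Kc * t\<^sup>2 * L2_norm_sq \<psi>"
    proof -
      have "T \<le> (\<Sum>k\<in>{1..?N}. (a k)\<^sup>2 * (K1\<^sup>2 * (t\<^sup>2 * Msm) * ((real ?N)\<^sup>2 * L2_norm_sq \<psi>)))"
        unfolding T_def by (rule sum_mono) (rule ck)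
      also have "\<dots> = Kc * t\<^sup>2 * L2_norm_sq \<psi>"
        unfolding Kc_def sum_distrib_right[symmetric] by (simp add: ac_simps)
      finally show ?thesis .
    qed
    have c00: "c 0 = 0" using c0 by (simp add: c_def)
    have sums: "(\<lambda>k. (c k)\<^sup>2) sums L2_norm_sq \<psi>"
      unfolding c_def by (rule parseval[OF S_L2 S_orth S_complete \<psi>L2])
    have hs: "((\<lambda>k. (c k)\<^sup>2) has_sum L2_norm_sq \<psi>) UNIV"
      by (rule sums_nonneg_imp_has_sum[OF sums]) simp
    have summ: "(\<lambda>k. (c k)\<^sup>2) summable_on UNIV" using hs by (simp add: has_sum_iff)
    have inf_eq: "infsum (\<lambda>k. (c k)\<^sup>2) {?N + 1..} = L2_norm_sq \<psi> - T"
    proof -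
      have U: "(UNIV :: nat set) = {..?N} \<union> {?N + 1..}" by auto
      have "L2_norm_sq \<psi> = infsum (\<lambda>k. (c k)\<^sup>2) UNIV" using hs by (simp add: has_sum_iff)
      also have "\<dots> = infsum (\<lambda>k. (c k)\<^sup>2) {..?N} + infsum (\<lambda>k. (c k)\<^sup>2) {?N + 1..}"
        unfolding U
        by (rule infsum_Un_disjoint) (auto intro: summable_on_subset_banach[OF summ])
      also have "infsum (\<lambda>k. (c k)\<^sup>2) {..?N} = (\<Sum>k\<le>?N. (c k)\<^sup>2)" by simp
      also have "\<dots> = T"
      proof -
        have "{..?N} = insert 0 {1..?N}" by auto
        then show ?thesis unfolding T_def by (simp add: c00)
      qed
      finally show ?thesis by simp
    qed
    have nn: "0 \<le> L2_norm_sq \<psi>" unfolding L2_norm_sq_def by (rule integral_nonneg_AE) auto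
    have ex: "\<exists>e. \<bar>e\<bar> \<le> \<eta> t \<and> infsum (\<lambda>k. (c k)\<^sup>2) {?N + 1..} = L2_norm_sq \<psi> * (1 + e)"
    proof (cases "L2_norm_sq \<psi> = 0")
      case True
      then have "T = 0" using Tb T0 by simp
      then show ?thesis using True inf_eq Kc0 by (intro exI[of _ 0]) (simp add: \<eta>_def)
    next
      case False
      then have pos: "L2_norm_sq \<psi> > 0" using nn by simp
      show ?thesis
      proof (intro exI[of _ "- T / L2_norm_sq \<psi>"] conjI)
        have "\<bar>- T / L2_norm_sq \<psi>\<bar> = T / L2_norm_sq \<psi>" using T0 pos by simp
        also have "\<dots> \<le> Kc * t\<^sup>2" using Tb pos by (simp add: divide_le_eq)
        finally show "\<bar>- T / L2_norm_sq \<psi>\<bar> \<le> \<eta> t" by (simp add: \<eta>_def)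
        show "infsum (\<lambda>k. (c k)\<^sup>2) {?N + 1..} = L2_norm_sq \<psi> * (1 + - T / L2_norm_sq \<psi>)"
          unfolding inf_eq using pos by (simp add: field_simps)
      qed
    qed
    show ?thesis using ex c0 unfolding c_def \<psi>_def t_def by simp
  qed
  have all: "\<forall>\<phi>. C11_sphere \<phi> \<and> Linf_sphere \<phi> \<le> r0 / 2 \<and> measure lebesgue (ns_set r0 \<phi>) = 1 \<and>
         barycenter (ns_set r0 \<phi>) = 0 \<and> C11_norm \<phi> < 1 \<longrightarrow>
      L2_inner (psi_fun r0 \<phi>) (S 0) = 0 \<and> (\<exists>e. \<bar>e\<bar> \<le> \<eta> (Linf_sphere \<phi>) \<and>
        infsum (\<lambda>k. (L2_inner (psi_fun r0 \<phi>) (S k))\<^sup>2) {?N + 1..} = L2_norm_sq (psi_fun r0 \<phi>) * (1 + e))"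
    using main by blast
  show ?thesis
    by (intro exI[of _ "1::real"] conjI exI[of _ \<eta>]) (use mod all in auto)
qed



end
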